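(* Let $K\subset\mathbb R$ be compact, let $h:\mathbb R\to\mathbb R$ be a continuous increasing function with $h(0)=0$, and let $\varepsilon>0$. Then there exists a flow map $\varphi$ of the one-dimensional control system $\dot x=\theta_1x^3+\theta_2x^2$ with control $\theta=(\theta_1,\theta_2)\in\mathbb R^2$ (i.e. $\varphi\in\mathcal A_{\mathcal F}(K)$) such that $\|\varphi-h\|_{C(K)}<\varepsilon$.
   Context: Controls are piecewise constant; $\mathcal F=\{x\mapsto\theta_1x^3+\theta_2x^2:\theta\in\mathbb R^2\}$. For $g\in\mathcal F$, $\varphi^g_t$ is the time-$t$ flow of $\dot x=g(x)$. $\mathcal A_{\mathcal F}(K)$ is the set of compositions $\varphi^{f_k}_{t_k}\circ\cdots\circ\varphi^{f_1}_{t_1}$ on $K$ where, with $K_0=K$, each $t_j\ge0$ is smaller than the maximal time for which the flow of $f_j\in\mathcal F$ exists for all initial points in $K_{j-1}$, and $K_j=\varphi^{f_j}_{t_j}(K_{j-1})$. $\|\cdot\|_{C(K)}$ is the supremum norm on $K$. *)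

theory Defs
  imports "HOL-Analysis.Analysis"
begin

definition cubic_field :: "real \<times> real \<Rightarrow> real \<Rightarrow> real" where
  "cubic_field \<theta> x = fst \<theta> * x ^ 3 + snd \<theta> * x ^ 2"

definition FF :: "(real \<Rightarrow> real) set" where
  "FF = {g. \<exists>\<theta>. g = cubic_field \<theta>}"

definition is_solution :: "(real \<Rightarrow> real) \<Rightarrow> real \<Rightarrow> real \<Rightarrow> (real \<Rightarrow> real) \<Rightarrow> bool" where
  "is_solution g T x0 y \<longleftrightarrow> y 0 = x0 \<and>
     (\<forall>s\<in>{0..T}. (y has_real_derivative g (y s)) (at s within {0..T}))"

definition flow_exists :: "(real \<Rightarrow> real) \<Rightarrow> real \<Rightarrow> real \<Rightarrow> bool" where
  "flow_exists g T x0 \<longleftrightarrow> (\<exists>y. is_solution g T x0 y)"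

text \<open>Time-t flow map (solutions are unique for locally Lipschitz g).\<close>
definition flow :: "(real \<Rightarrow> real) \<Rightarrow> real \<Rightarrow> real \<Rightarrow> real" where
  "flow g t x0 = (THE z. \<exists>y. is_solution g t x0 y \<and> y t = z)"

text \<open>The time t must be smaller than the maximal time of existence for all initial points
  of the current set, i.e. there is T > t such that the flow exists on [0,T] for all of them.\<close>
inductive AF :: "real set \<Rightarrow> (real \<Rightarrow> real) \<Rightarrow> real set \<Rightarrow> bool" for K where
  AF_id: "AF K id K"
| AF_step: "AF K \<phi> K' \<Longrightarrow> g \<in> FF \<Longrightarrow> 0 \<le> t \<Longrightarrow>
     (\<exists>T>t. \<forall>x\<in>K'. flow_exists g T x) \<Longrightarrow>
     AF K (flow g t \<circ> \<phi>) (flow g t ` K')"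

definition A_F :: "real set \<Rightarrow> (real \<Rightarrow> real) set" where
  "A_F K = {\<phi>. \<exists>K'. AF K \<phi> K'}"

end

theory Submission
  imports Defs
begin

lemma cubic_lip:
  fixes a b M :: real
  assumes "\<bar>a\<bar> \<le> M" "\<bar>b\<bar> \<le> M"
  shows "\<bar>cubic_field th a - cubic_field th b\<bar> \<le> (3*\<bar>fst th\<bar>*M^2 + 2*\<bar>snd th\<bar>*M) * \<bar>a - b\<bar>"
proof -
  have e: "cubic_field th a - cubic_field th b = (a - b) * (fst th * (a^2+a*b+b^2) + snd th * (a+b))"
    unfolding cubic_field_def by (simp add: algebra_simps power2_eq_square power3_eq_cube)
  have M0: "0 \<le> M" using assms by linarith
  have h1: "\<bar>a^2+a*b+b^2\<bar> \<le> 3*M^2"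
  proof -
    have "\<bar>a^2+a*b+b^2\<bar> \<le> \<bar>a^2\<bar>+\<bar>a*b\<bar>+\<bar>b^2\<bar>"
      by (rule order_trans[OF abs_triangle_ineq add_right_mono[OF abs_triangle_ineq]])
    also have "\<dots> = \<bar>a\<bar>*\<bar>a\<bar>+\<bar>a\<bar>*\<bar>b\<bar>+\<bar>b\<bar>*\<bar>b\<bar>" by (simp add: abs_mult power2_eq_square)
    also have "\<dots> \<le> M*M + M*M + M*M"
      by (intro add_mono mult_mono) (use assms in auto)
    finally show ?thesis by (simp add: power2_eq_square)
  qed
  have h2: "\<bar>a+b\<bar> \<le> 2*M" using assms by linarith
  have "\<bar>fst th * (a^2+a*b+b^2) + snd th * (a+b)\<bar> \<le> \<bar>fst th\<bar> * \<bar>a^2+a*b+b^2\<bar> + \<bar>snd th\<bar>*\<bar>a+b\<bar>"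
    by (metis abs_mult abs_triangle_ineq)
  also have "\<dots> \<le> \<bar>fst th\<bar> * (3*M^2) + \<bar>snd th\<bar>*(2*M)"
    by (intro add_mono mult_left_mono h1 h2) auto
  finally have h3: "\<bar>fst th * (a^2+a*b+b^2) + snd th * (a+b)\<bar> \<le> 3*\<bar>fst th\<bar>*M^2 + 2*\<bar>snd th\<bar>*M" by simp
  show ?thesis unfolding e abs_mult
    by (subst mult.commute) (intro mult_right_mono h3 abs_ge_zero)
qed
lemma sol_cont:
  assumes "is_solution g T x0 y"
  shows "continuous_on {0..T} y"
  using assms unfolding is_solution_def
  by (meson DERIV_continuous continuous_on_eq_continuous_within)

lemma sol_unique:
  assumes y: "is_solution (cubic_field th) T x0 y" and z: "is_solution (cubic_field th) T x0 z"
    and s: "s \<in> {0..T}"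
  shows "y s = z s"
proof -
  let ?g = "cubic_field th"
  have cy: "continuous_on {0..T} y" and cz: "continuous_on {0..T} z"
    using sol_cont y z by auto
  obtain My where My: "\<And>t. t \<in> {0..T} \<Longrightarrow> \<bar>y t\<bar> \<le> My"
    using compact_imp_bounded[OF compact_continuous_image[OF cy compact_Icc]]
    unfolding bounded_iff by (metis image_eqI real_norm_def)
  obtain Mz where Mz: "\<And>t. t \<in> {0..T} \<Longrightarrow> \<bar>z t\<bar> \<le> Mz"
    using compact_imp_bounded[OF compact_continuous_image[OF cz compact_Icc]]
    unfolding bounded_iff by (metis image_eqI real_norm_def)
  define M where "M = max My Mz"
  have yM: "\<And>t. t \<in> {0..T} \<Longrightarrow> \<bar>y t\<bar> \<le> M" using My unfolding M_def by force
  have zM: "\<And>t. t \<in> {0..T} \<Longrightarrow> \<bar>z t\<bar> \<le> M" using Mz unfolding M_def by force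
  define L where "L = 3*\<bar>fst th\<bar>*M^2 + 2*\<bar>snd th\<bar>*M"
  have lip: "\<And>t. t \<in> {0..T} \<Longrightarrow> \<bar>?g (y t) - ?g (z t)\<bar> \<le> L * \<bar>y t - z t\<bar>"
    unfolding L_def using cubic_lip yM zM by blast
  define u where "u t = (y t - z t)^2 * exp (-(2*L) * t)" for t
  have cu: "continuous_on {0..s} u"
  proof -
    have "{0..s} \<subseteq> {0..T}" using s by auto
    then have "continuous_on {0..s} y" "continuous_on {0..s} z"
      using cy cz continuous_on_subset by blast+
    then show ?thesis unfolding u_def by (intro continuous_intros)
  qed
  have du: "\<exists>D. (u has_real_derivative D) (at t) \<and> D \<le> 0" if t: "0 < t" "t < s" for t
  proof -
    have tT: "0 < t" "t < T" using t s by auto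
    have yd: "(y has_real_derivative ?g (y t)) (at t)"
      using y tT unfolding is_solution_def by (metis at_within_Icc_at atLeastAtMost_iff less_eq_real_def)
    have zd: "(z has_real_derivative ?g (z t)) (at t)"
      using z tT unfolding is_solution_def by (metis at_within_Icc_at atLeastAtMost_iff less_eq_real_def)
    have d1: "((\<lambda>t. y t - z t) has_real_derivative (?g (y t) - ?g (z t))) (at t)"
      using DERIV_diff[OF yd zd] .
    have d2: "((\<lambda>t. (y t - z t)^2) has_real_derivative (2 * ((?g (y t) - ?g (z t)) * (y t - z t)))) (at t)"
      using DERIV_power[OF d1, of 2] by (simp add: algebra_simps)
    have d3: "((\<lambda>t. exp (-(2*L) * t)) has_real_derivative (exp (-(2*L) * t) * (-(2*L)))) (at t)"
      using DERIV_fun_exp[OF DERIV_cmult[OF DERIV_ident, of "-(2*L)"]] by simp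
    let ?D = "(2 * ((?g (y t) - ?g (z t)) * (y t - z t))) * exp (-(2*L) * t) + (y t - z t)^2 * (exp (-(2*L) * t) * (-(2*L)))"
    have "(u has_real_derivative ?D) (at t)"
      unfolding u_def using DERIV_mult[OF d2 d3] by (simp add: algebra_simps)
    moreover have "?D \<le> 0"
    proof -
      have "(y t - z t)*(?g (y t) - ?g (z t)) \<le> \<bar>y t - z t\<bar> * (L * \<bar>y t - z t\<bar>)"
      proof -
        have "(y t - z t)*(?g (y t) - ?g (z t)) \<le> \<bar>(y t - z t)*(?g (y t) - ?g (z t))\<bar>" by simp
        also have "\<dots> = \<bar>y t - z t\<bar> * \<bar>?g (y t) - ?g (z t)\<bar>" by (simp add: abs_mult)
        also have "\<dots> \<le> \<bar>y t - z t\<bar> * (L * \<bar>y t - z t\<bar>)"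
          using lip[of t] tT by (intro mult_left_mono) auto
        finally show ?thesis .
      qed
      also have "\<dots> = L * (y t - z t)^2" by (simp add: power2_eq_square)
      finally have "2*((y t - z t)*(?g (y t) - ?g (z t))) \<le> 2*(L*(y t - z t)^2)" by linarith
      then have "2*((y t - z t)*(?g (y t) - ?g (z t))) * exp (-(2*L)*t) \<le> 2*(L*(y t - z t)^2) * exp (-(2*L)*t)"
        by (intro mult_right_mono) auto
      then show ?thesis by (simp add: algebra_simps)
    qed
    ultimately show ?thesis by blast
  qed
  have "u s \<le> u 0"
    using DERIV_nonpos_imp_decreasing_open[of 0 s u] du cu s by auto
  moreover have "u 0 = 0" using y z unfolding u_def is_solution_def by simp
  moreover have "u s \<ge> 0" unfolding u_def by simp
  ultimately have "u s = 0" by linarith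
  then show ?thesis unfolding u_def by simp
qed

definition Qm :: "real \<Rightarrow> real \<Rightarrow> real" where "Qm a x = x / (1 - a*x)"
definition Cm :: "real \<Rightarrow> real \<Rightarrow> real" where "Cm b x = x / sqrt (1 - b*x^2)"

datatype stp = SQ real | SC real

fun ev1 :: "stp \<Rightarrow> real \<Rightarrow> real" where
  "ev1 (SQ a) x = Qm a x" | "ev1 (SC b) x = Cm b x"
fun kap :: "stp \<Rightarrow> real \<Rightarrow> real" where
  "kap (SQ a) x = a*x" | "kap (SC b) x = b*x^2"
definition okp :: "stp \<Rightarrow> real \<Rightarrow> bool" where "okp s x \<longleftrightarrow> kap s x < 1"
fun gs :: "stp \<Rightarrow> real \<Rightarrow> real" where
  "gs (SQ a) = cubic_field (0, a)" | "gs (SC b) = cubic_field (b/2, 0)"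

fun evw :: "stp list \<Rightarrow> real \<Rightarrow> real" where
  "evw [] x = x" | "evw (s#w) x = evw w (ev1 s x)"
fun admp :: "stp list \<Rightarrow> real \<Rightarrow> bool" where
  "admp [] x = True" | "admp (s#w) x = (okp s x \<and> admp w (ev1 s x))"
definition adm :: "stp list \<Rightarrow> real set \<Rightarrow> bool" where "adm w X \<longleftrightarrow> (\<forall>x\<in>X. admp w x)"

lemma evw_append[simp]: "evw (w1 @ w2) x = evw w2 (evw w1 x)"
  by (induction w1 arbitrary: x) auto
lemma admp_append[simp]: "admp (w1 @ w2) x = (admp w1 x \<and> admp w2 (evw w1 x))"
  by (induction w1 arbitrary: x) auto

lemma gs_FF: "gs s \<in> FF"
  unfolding FF_def by (cases s) auto

lemma kap_cont: "continuous_on X (kap s)"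
  by (cases s) (auto intro!: continuous_intros)

lemma isCont_ev1: "okp s x \<Longrightarrow> isCont (ev1 s) x"
proof (cases s)
  case (SQ a)
  assume "okp s x" then have "1 - a*x \<noteq> 0" using SQ by (simp add: okp_def)
  moreover have "ev1 s = (\<lambda>x. x / (1 - a*x))" using SQ by (auto simp: fun_eq_iff Qm_def)
  ultimately show ?thesis by (auto intro!: continuous_intros)
next
  case (SC b)
  assume "okp s x" then have "sqrt (1 - b*x^2) \<noteq> 0" using SC by (simp add: okp_def)
  moreover have "ev1 s = (\<lambda>x. x / sqrt (1 - b*x^2))" using SC by (auto simp: fun_eq_iff Cm_def)
  ultimately show ?thesis by (auto intro!: continuous_intros)
qed

lemma isCont_evw: "admp w x \<Longrightarrow> isCont (evw w) x"
proof (induction w arbitrary: x)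
  case Nil then show ?case by simp
next
  case (Cons s w)
  then have "isCont (\<lambda>x. evw w (ev1 s x)) x"
    using isCont_ev1 by (intro continuous_at_compose[unfolded o_def, of x "ev1 s" "evw w"]) auto
  then show ?case by simp
qed

lemma cont_evw: "adm w X \<Longrightarrow> continuous_on X (evw w)"
  unfolding adm_def using isCont_evw continuous_at_imp_continuous_on by blast

lemma exists_T:
  fixes k :: "real \<Rightarrow> real"
  assumes "compact X" "continuous_on X k" "\<forall>x\<in>X. k x < 1"
  shows "\<exists>T>1. \<forall>x\<in>X. T * k x < 1"
proof (cases "X = {}")
  case True show ?thesis by (rule exI[of _ "2::real"]) (simp add: True)
next
  case False
  obtain x0 where x0: "x0 \<in> X" "\<forall>x\<in>X. k x \<le> k x0"
    using compact_attains_sup[OF compact_continuous_image[OF assms(2,1)]] False by auto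
  have k1: "k x0 < 1" using assms(3) x0 by auto
  show ?thesis
  proof (cases "k x0 \<le> 0")
    case True
    have "\<forall>x\<in>X. 2 * k x < 1" using x0 True by force
    then show ?thesis by (intro exI[of _ 2]) auto
  next
    case False
    define T where "T = (1 + 1/k x0)/2"
    have T1: "T > 1" using k1 False unfolding T_def by (simp add: field_simps)
    have Tk: "T * k x0 < 1" using k1 False unfolding T_def by (simp add: field_simps)
    have "\<forall>x\<in>X. T * k x < 1"
    proof
      fix x assume "x \<in> X"
      then have "T * k x \<le> T * k x0" using x0 T1 by (intro mult_left_mono) auto
      then show "T * k x < 1" using Tk by linarith
    qed
    then show ?thesis using T1 by blast
  qed
qed

lemma sol_at:
  assumes "\<forall>s\<in>{0..T}. (y has_real_derivative g (y s)) (at s)" "y 0 = x"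
  shows "is_solution g T x y"
  using assms unfolding is_solution_def by (auto intro: has_field_derivative_at_within)

lemma lin_pos:
  fixes T k s :: real
  assumes "T * k < 1" "s \<in> {0..T}"
  shows "0 < 1 - s * k"
proof (cases "k \<le> 0")
  case True then show ?thesis using assms by (simp add: mult_nonneg_nonpos) (smt (verit) mult_nonneg_nonpos)
next
  case False
  then have "s * k \<le> T * k" using assms by (intro mult_right_mono) auto
  then show ?thesis using assms by linarith
qed

lemma solQ:
  assumes "T * (a*x) < 1"
  shows "is_solution (cubic_field (0,a)) T x (\<lambda>s. x / (1 - s*(a*x)))"
proof (rule sol_at)
  show "\<forall>s\<in>{0..T}. ((\<lambda>s. x / (1 - s*(a*x))) has_real_derivative cubic_field (0,a) (x / (1 - s*(a*x)))) (at s)"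
  proof
    fix s assume s: "s \<in> {0..T}"
    have p: "0 < 1 - s*(a*x)" using lin_pos[OF assms s] .
    have d: "((\<lambda>s. 1 - s*(a*x)) has_real_derivative (0 - 1 * (a*x))) (at s)"
      by (intro DERIV_diff DERIV_const DERIV_cmult_right DERIV_ident)
    have "((\<lambda>s. x / (1 - s*(a*x))) has_real_derivative ((0 * (1 - s*(a*x)) - x * (0 - 1*(a*x))) / ((1 - s*(a*x)) * (1 - s*(a*x))))) (at s)"
      using DERIV_divide[OF DERIV_const d] p by simp
    moreover have "(0 * (1 - s*(a*x)) - x * (0 - 1*(a*x))) / ((1 - s*(a*x)) * (1 - s*(a*x))) = cubic_field (0,a) (x / (1 - s*(a*x)))"
      unfolding cubic_field_def using p by (simp add: field_simps power2_eq_square)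
    ultimately show "((\<lambda>s. x / (1 - s*(a*x))) has_real_derivative cubic_field (0,a) (x / (1 - s*(a*x)))) (at s)"
      by simp
  qed
qed simp

lemma solC:
  assumes "T * (b*x^2) < 1"
  shows "is_solution (cubic_field (b/2,0)) T x (\<lambda>s. x / sqrt (1 - s*(b*x^2)))"
proof (rule sol_at)
  show "\<forall>s\<in>{0..T}. ((\<lambda>s. x / sqrt (1 - s*(b*x^2))) has_real_derivative cubic_field (b/2,0) (x / sqrt (1 - s*(b*x^2)))) (at s)"
  proof
    fix s assume s: "s \<in> {0..T}"
    define w where "w = 1 - s*(b*x^2)"
    have p: "0 < w" using lin_pos[OF assms s] unfolding w_def .
    have d: "((\<lambda>s. 1 - s*(b*x^2)) has_real_derivative (0 - 1 * (b*x^2))) (at s)"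
      by (intro DERIV_diff DERIV_const DERIV_cmult_right DERIV_ident)
    have ds: "((\<lambda>s. sqrt (1 - s*(b*x^2))) has_real_derivative (inverse (sqrt w) / 2 * (0 - 1 * (b*x^2)))) (at s)"
      using DERIV_chain2[OF DERIV_real_sqrt[OF p[unfolded w_def]] d] unfolding w_def .
    have sp: "sqrt w > 0" using p by simp
    have "((\<lambda>s. x / sqrt (1 - s*(b*x^2))) has_real_derivative ((0 * sqrt w - x * (inverse (sqrt w) / 2 * (0 - 1 * (b*x^2)))) / (sqrt w * sqrt w))) (at s)"
      using DERIV_divide[OF DERIV_const ds] sp unfolding w_def by simp
    moreover have "(0 * sqrt w - x * (inverse (sqrt w) / 2 * (0 - 1 * (b*x^2)))) / (sqrt w * sqrt w) = cubic_field (b/2,0) (x / sqrt w)"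
    proof -
      have "sqrt w * sqrt w = w" using p by simp
      then show ?thesis unfolding cubic_field_def using sp
        by (simp add: field_simps power3_eq_cube power2_eq_square)
    qed
    ultimately show "((\<lambda>s. x / sqrt (1 - s*(b*x^2))) has_real_derivative cubic_field (b/2,0) (x / sqrt (1 - s*(b*x^2)))) (at s)"
      unfolding w_def by simp
  qed
qed simp

lemma flow_eq:
  assumes "is_solution (cubic_field th) t x y" "0 \<le> t"
  shows "flow (cubic_field th) t x = y t"
proof -
  have "\<exists>y'. is_solution (cubic_field th) t x y' \<and> y' t = y t" using assms by blast
  moreover have "\<And>z. (\<exists>y'. is_solution (cubic_field th) t x y' \<and> y' t = z) \<Longrightarrow> z = y t"
  proof -
    fix z assume "\<exists>y'. is_solution (cubic_field th) t x y' \<and> y' t = z"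
    then obtain y' where y': "is_solution (cubic_field th) t x y'" "y' t = z" by blast
    show "z = y t" using sol_unique[OF y'(1) assms(1), of t] assms(2) y'(2) by auto
  qed
  ultimately show ?thesis unfolding flow_def by (rule the_equality)
qed

lemma step_flow:
  assumes "T * kap s x < 1" "T \<ge> 1"
  shows "flow_exists (gs s) T x" "flow (gs s) 1 x = ev1 s x"
proof -
  have k1: "1 * kap s x < 1"
    using assms lin_pos[OF assms(1), of 1] by auto
  show "flow_exists (gs s) T x"
  proof (cases s)
    case (SQ a) then show ?thesis using assms solQ[of T a x] unfolding flow_exists_def by auto
  next
    case (SC b) then show ?thesis using assms solC[of T b x] unfolding flow_exists_def by auto
  qed
  show "flow (gs s) 1 x = ev1 s x"
  proof (cases s)
    case (SQ a)
    then show ?thesis using flow_eq[OF solQ[of 1 a x]] k1 by (simp add: Qm_def)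
  next
    case (SC b)
    then show ?thesis using flow_eq[OF solC[of 1 b x]] k1 by (simp add: Cm_def)
  qed
qed

lemma realize:
  assumes "compact X" "adm w X"
  shows "\<exists>\<phi>. AF X \<phi> (evw w ` X) \<and> (\<forall>x\<in>X. \<phi> x = evw w x)"
  using assms(2)
proof (induction w rule: rev_induct)
  case Nil
  have "AF X id X" by (rule AF_id)
  moreover have "evw [] ` X = X" by simp
  moreover have "\<forall>x\<in>X. id x = evw [] x" by simp
  ultimately show ?case by metis
next
  case (snoc s w)
  have aw: "adm w X" using snoc.prems unfolding adm_def by auto
  obtain \<phi> where \<phi>: "AF X \<phi> (evw w ` X)" "\<forall>x\<in>X. \<phi> x = evw w x" using snoc.IH[OF aw] by blast
  define X' where "X' = evw w ` X"
  have cX': "compact X'" unfolding X'_def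
    using compact_continuous_image[OF cont_evw[OF aw] assms(1)] .
  have ok: "\<forall>x\<in>X'. kap s x < 1" using snoc.prems unfolding X'_def by (auto simp: adm_def okp_def)
  obtain T where T: "T > 1" "\<forall>x\<in>X'. T * kap s x < 1"
    using exists_T[OF cX' kap_cont ok] by blast
  have fe: "\<forall>x\<in>X'. flow_exists (gs s) T x" using step_flow(1) T by auto
  have fv: "\<forall>x\<in>X'. flow (gs s) 1 x = ev1 s x" using step_flow(2) T by auto
  have "AF X (flow (gs s) 1 \<circ> \<phi>) (flow (gs s) 1 ` X')"
    unfolding X'_def by (rule AF_step[OF \<phi>(1) gs_FF]) (use T fe X'_def in auto)
  moreover have "flow (gs s) 1 ` X' = evw (w @ [s]) ` X"
    unfolding X'_def using fv X'_def by (auto simp: image_iff)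
  moreover have "\<forall>x\<in>X. (flow (gs s) 1 \<circ> \<phi>) x = evw (w @ [s]) x"
    using \<phi>(2) fv X'_def by auto
  ultimately show ?case by metis
qed

lemma Qm_inv: "x \<noteq> 0 \<Longrightarrow> 1 - a*x > 0 \<Longrightarrow> 1 / Qm a x = 1/x - a"
  unfolding Qm_def by (simp add: field_simps)
lemma Qm_sgn: "1 - a*x > 0 \<Longrightarrow> (Qm a x > 0 \<longleftrightarrow> x > 0) \<and> (Qm a x < 0 \<longleftrightarrow> x < 0)"
  unfolding Qm_def by (simp add: divide_pos_pos zero_less_divide_iff divide_less_0_iff)
lemma Cm_inv: "x \<noteq> 0 \<Longrightarrow> 1 - b*x^2 > 0 \<Longrightarrow> 1 / (Cm b x)^2 = 1/x^2 - b"
  unfolding Cm_def by (simp add: field_simps power_divide)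
lemma Cm_sgn: "1 - b*x^2 > 0 \<Longrightarrow> (Cm b x > 0 \<longleftrightarrow> x > 0) \<and> (Cm b x < 0 \<longleftrightarrow> x < 0)"
  unfolding Cm_def by (simp add: zero_less_divide_iff divide_less_0_iff)

lemma ev1_sgn: "okp s x \<Longrightarrow> (ev1 s x > 0 \<longleftrightarrow> x > 0) \<and> (ev1 s x < 0 \<longleftrightarrow> x < 0)"
  by (cases s) (auto simp: okp_def Qm_sgn Cm_sgn)

lemma ev1_0[simp]: "ev1 s 0 = 0" by (cases s) (auto simp: Qm_def Cm_def)
lemma okp_0[simp]: "okp s 0" by (cases s) (auto simp: okp_def)
lemma evw_0[simp]: "evw w 0 = 0" by (induction w) auto
lemma admp_0[simp]: "admp w 0" by (induction w) auto

lemma evw_sgn: "admp w x \<Longrightarrow> (evw w x > 0 \<longleftrightarrow> x > 0) \<and> (evw w x < 0 \<longleftrightarrow> x < 0)"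
proof (induction w arbitrary: x)
  case Nil then show ?case by simp
next
  case (Cons s w) then show ?case using ev1_sgn[of s x] by auto
qed

lemma Qm_mono: "1 - a*x > 0 \<Longrightarrow> 1 - a*y > 0 \<Longrightarrow> x < y \<Longrightarrow> Qm a x < Qm a y"
proof -
  assume h: "1 - a*x > 0" "1 - a*y > 0" "x < y"
  have "Qm a y - Qm a x = (y - x) / ((1-a*x)*(1-a*y))"
    unfolding Qm_def using h by (simp add: field_simps)
  also have "\<dots> > 0" using h by simp
  finally show ?thesis by simp
qed

lemma Cm_sq: "1 - b*x^2 > 0 \<Longrightarrow> (Cm b x)^2 = x^2 / (1 - b*x^2)"
  unfolding Cm_def by (simp add: power_divide)

lemma Cm_mono_nonneg: "1 - b*y^2 > 0 \<Longrightarrow> 0 \<le> x \<Longrightarrow> x < y \<Longrightarrow> Cm b x < Cm b y"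
proof -
  assume h: "1 - b*y^2 > 0" "0 \<le> x" "x < y"
  have x2: "x^2 < y^2" using h by (simp add: power_strict_mono)
  have hx: "1 - b*x^2 > 0"
  proof (cases "b \<le> 0")
    case True then show ?thesis by (smt (verit) mult_nonpos_nonneg zero_le_power2)
  next
    case False then have "b*x^2 \<le> b*y^2" using x2 by simp
    then show ?thesis using h by linarith
  qed
  have "x^2 / (1 - b*x^2) < y^2 / (1 - b*y^2)"
  proof -
    have "x^2 * (1 - b*y^2) < y^2 * (1 - b*x^2)" using x2 by (simp add: algebra_simps)
    then show ?thesis using hx h by (simp add: divide_less_eq field_simps)
  qed
  then have "(Cm b x)^2 < (Cm b y)^2" using Cm_sq hx h by simp
  moreover have "Cm b x \<ge> 0" "Cm b y \<ge> 0" unfolding Cm_def using h hx by auto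
  ultimately show ?thesis using power_less_imp_less_base by blast
qed

lemma Cm_odd: "Cm b (-x) = - Cm b x" unfolding Cm_def by simp

lemma Cm_mono: "1 - b*x^2 > 0 \<Longrightarrow> 1 - b*y^2 > 0 \<Longrightarrow> x < y \<Longrightarrow> Cm b x < Cm b y"
proof -
  assume h: "1 - b*x^2 > 0" "1 - b*y^2 > 0" "x < y"
  show ?thesis
  proof (cases "0 \<le> x")
    case True then show ?thesis using Cm_mono_nonneg h by blast
  next
    case False
    show ?thesis
    proof (cases "y \<le> 0")
      case True
      have "Cm b (-y) < Cm b (-x)" using Cm_mono_nonneg[of b "-x" "-y"] h True by simp
      then show ?thesis using Cm_odd by simp
    next
      case False
      then have "Cm b y > 0" "Cm b x < 0" using Cm_sgn h \<open>\<not> 0 \<le> x\<close> by auto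
      then show ?thesis by simp
    qed
  qed
qed

lemma ev1_mono: "okp s x \<Longrightarrow> okp s y \<Longrightarrow> x < y \<Longrightarrow> ev1 s x < ev1 s y"
  by (cases s) (auto simp: okp_def Qm_mono Cm_mono)

lemma evw_mono: "admp w x \<Longrightarrow> admp w y \<Longrightarrow> x < y \<Longrightarrow> evw w x < evw w y"
proof (induction w arbitrary: x y)
  case Nil then show ?case by simp
next
  case (Cons s w) then show ?case using ev1_mono[of s x y] by auto
qed

lemma evw_mono_le: "admp w x \<Longrightarrow> admp w y \<Longrightarrow> x \<le> y \<Longrightarrow> evw w x \<le> evw w y"
  using evw_mono by (metis order_le_less)

fun mir :: "stp \<Rightarrow> stp" where "mir (SQ a) = SQ (-a)" | "mir (SC b) = SC b"
fun scl :: "real \<Rightarrow> stp \<Rightarrow> stp" where "scl c (SQ a) = SQ (a/c)" | "scl c (SC b) = SC (b/c^2)"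

lemma ev1_mir: "ev1 (mir s) (-x) = - ev1 s x" "okp (mir s) (-x) = okp s x"
  by (cases s; simp add: Qm_def Cm_def okp_def)+

lemma evw_mir: "evw (map mir w) (-x) = - evw w x" "admp (map mir w) (-x) = admp w x"
proof (induction w arbitrary: x)
  case Nil
  { case 1 then show ?case by simp }
  { case 2 then show ?case by simp }
next
  case (Cons s w)
  { case 1 then show ?case using Cons ev1_mir by simp }
  { case 2 then show ?case using Cons ev1_mir by simp }
qed

lemma ev1_scl: "c > 0 \<Longrightarrow> ev1 (scl c s) (c*x) = c * ev1 s x"
  "c > 0 \<Longrightarrow> okp (scl c s) (c*x) = okp s x"
  by (cases s; simp add: Qm_def Cm_def okp_def field_simps power2_eq_square; simp add: real_sqrt_mult)+

lemma evw_scl: "c > 0 \<Longrightarrow> evw (map (scl c) w) (c*x) = c * evw w x"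
  "c > 0 \<Longrightarrow> admp (map (scl c) w) (c*x) = admp w x"
proof (induction w arbitrary: x)
  case Nil
  { case 1 then show ?case by simp }
  { case 2 then show ?case by simp }
next
  case (Cons s w)
  { case 1 then show ?case using Cons ev1_scl by simp }
  { case 2 then show ?case using Cons ev1_scl by simp }
qed

definition apx :: "(real \<Rightarrow> real) \<Rightarrow> real \<Rightarrow> real \<Rightarrow> bool" where
  "apx f p q \<longleftrightarrow> (\<forall>\<eta>>0. \<exists>w. adm w {p..q} \<and> (\<forall>x\<in>{p..q}. \<bar>evw w x - f x\<bar> \<le> \<eta>))"

lemma apx_comp:
  assumes af: "apx f p q" and cf: "continuous_on {p..q} f"
    and ag: "apx g p' q'" and cg: "continuous_on {p'..q'} g"
    and r: "r > 0" and fr: "\<forall>x\<in>{p..q}. p' + r \<le> f x \<and> f x \<le> q' - r"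
  shows "apx (g \<circ> f) p q"
  unfolding apx_def
proof (intro allI impI)
  fix \<eta> :: real assume \<eta>: "\<eta> > 0"
  have uc: "uniformly_continuous_on {p'..q'} g" using compact_uniformly_continuous[OF cg] by simp
  obtain \<delta> where \<delta>: "\<delta> > 0" "\<And>x x'. x \<in> {p'..q'} \<Longrightarrow> x' \<in> {p'..q'} \<Longrightarrow> dist x' x < \<delta> \<Longrightarrow> dist (g x') (g x) < \<eta>/2"
    using uniformly_continuous_onE[OF uc, of "\<eta>/2"] \<eta> by (metis half_gt_zero)
  define \<delta>' where "\<delta>' = min (\<delta>/2) r"
  have \<delta>': "\<delta>' > 0" "\<delta>' < \<delta>" "\<delta>' \<le> r" using \<delta> r unfolding \<delta>'_def by auto
  obtain w1 where w1: "adm w1 {p..q}" "\<forall>x\<in>{p..q}. \<bar>evw w1 x - f x\<bar> \<le> \<delta>'"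
    using af \<delta>' unfolding apx_def by blast
  obtain w2 where w2: "adm w2 {p'..q'}" "\<forall>x\<in>{p'..q'}. \<bar>evw w2 x - g x\<bar> \<le> \<eta>/2"
    using ag \<eta> unfolding apx_def by (meson half_gt_zero)
  have inr: "evw w1 x \<in> {p'..q'}" if "x \<in> {p..q}" for x
  proof -
    have "\<bar>evw w1 x - f x\<bar> \<le> \<delta>'" "p' + r \<le> f x" "f x \<le> q' - r" using w1(2) fr that by auto
    then show ?thesis using \<delta>'(3) by (auto simp: abs_le_iff)
  qed
  have "adm (w1 @ w2) {p..q}"
    using w1(1) w2(1) inr unfolding adm_def by auto
  moreover have "\<bar>evw (w1 @ w2) x - (g \<circ> f) x\<bar> \<le> \<eta>" if x: "x \<in> {p..q}" for x
  proof -
    have "p' + r \<le> f x \<and> f x \<le> q' - r" using fr x by blast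
    then have fx: "f x \<in> {p'..q'}" using r by auto
    have "\<bar>evw w2 (evw w1 x) - g (evw w1 x)\<bar> \<le> \<eta>/2" using w2(2) inr[OF x] by blast
    moreover have "\<bar>g (evw w1 x) - g (f x)\<bar> < \<eta>/2"
    proof -
      have "\<bar>evw w1 x - f x\<bar> \<le> \<delta>'" using w1(2) x by blast
      then have "dist (evw w1 x) (f x) < \<delta>" using \<delta>'(2) by (simp add: dist_real_def)
      then show ?thesis using \<delta>(2)[OF fx inr[OF x]] by (simp add: dist_real_def)
    qed
    ultimately show ?thesis unfolding evw_append o_def
      by (simp only: abs_le_iff abs_less_iff, elim conjE, intro conjI; linarith)
  qed
  ultimately show "\<exists>w. adm w {p..q} \<and> (\<forall>x\<in>{p..q}. \<bar>evw w x - (g \<circ> f) x\<bar> \<le> \<eta>)" by blast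
qed

lemma apx_mono: "apx f p q \<Longrightarrow> p \<le> p' \<Longrightarrow> q' \<le> q \<Longrightarrow> apx f p' q'"
  unfolding apx_def adm_def by (meson atLeastAtMost_iff order_trans)

lemma apx_mir:
  assumes "apx f p q" shows "apx (\<lambda>x. - f (-x)) (-q) (-p)"
  unfolding apx_def
proof (intro allI impI)
  fix \<eta> :: real assume "\<eta> > 0"
  then obtain w where w: "adm w {p..q}" "\<forall>x\<in>{p..q}. \<bar>evw w x - f x\<bar> \<le> \<eta>"
    using assms unfolding apx_def by blast
  have e: "evw (map mir w) x = - evw w (-x)" "admp (map mir w) x = admp w (-x)" for x
    using evw_mir[of w "-x"] by auto
  show "\<exists>w. adm w {-q..-p} \<and> (\<forall>x\<in>{-q..-p}. \<bar>evw w x - - f (- x)\<bar> \<le> \<eta>)"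
    apply (intro exI[of _ "map mir w"] conjI)
    using w unfolding adm_def e by (auto, smt (verit) atLeastAtMost_iff)
qed

definition goodG :: "(real \<Rightarrow> real) \<Rightarrow> bool" where
  "goodG f \<longleftrightarrow> (\<forall>R>0. apx f (-R) R \<and> continuous_on {-R..R} f)"

lemma goodG_comp:
  assumes "goodG f" "goodG g" shows "goodG (g \<circ> f)"
  unfolding goodG_def
proof (intro allI impI conjI)
  fix R :: real assume R: "R > 0"
  have af: "apx f (-R) R" and cf: "continuous_on {-R..R} f" using assms(1) R unfolding goodG_def by auto
  obtain R' where R': "\<forall>x\<in>{-R..R}. \<bar>f x\<bar> \<le> R'"
    using compact_imp_bounded[OF compact_continuous_image[OF cf compact_Icc]]
    unfolding bounded_iff by (metis image_eqI real_norm_def)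
  define R2 where "R2 = \<bar>R'\<bar> + 1"
  have R2: "R2 > 0" unfolding R2_def by simp
  have ag: "apx g (-R2) R2" and cg: "continuous_on {-R2..R2} g" using assms(2) R2 unfolding goodG_def by auto
  show "apx (g \<circ> f) (-R) R"
    by (rule apx_comp[OF af cf ag cg, of 1]) (use R' in \<open>auto simp: R2_def abs_le_iff\<close>)
  have "continuous_on {-R..R} f" by fact
  moreover have "f ` {-R..R} \<subseteq> {-R2..R2}" using R' unfolding R2_def by (force simp: abs_le_iff)
  ultimately show "continuous_on {-R..R} (g \<circ> f)"
    using continuous_on_compose continuous_on_subset cg by blast
qed

lemma goodG_mir: assumes "goodG f" shows "goodG (\<lambda>x. - f (-x))"
  unfolding goodG_def
proof (intro allI impI conjI)
  fix R :: real assume R: "R > 0"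
  then show "apx (\<lambda>x. - f (- x)) (- R) R" using apx_mir[of f "-R" R] assms unfolding goodG_def by auto
  have "continuous_on {-R..R} f" using assms R unfolding goodG_def by auto
  moreover have "uminus ` {-R..R} \<subseteq> {-R..(R::real)}" by auto
  ultimately have "continuous_on {-R..R} (f \<circ> uminus)"
    by (intro continuous_on_compose) (auto intro: continuous_on_subset continuous_intros)
  then show "continuous_on {-R..R} (\<lambda>x. - f (- x))"
    by (auto intro!: continuous_intros simp: o_def)
qed

definition Pf :: "nat \<Rightarrow> real \<Rightarrow> real \<Rightarrow> real" where
  "Pf N c x = (if x \<le> 0 then x else x * (1 + c*x^N) powr (-1/N))"

lemma Pf_nonpos[simp]: "x \<le> 0 \<Longrightarrow> Pf N c x = x" unfolding Pf_def by simp

lemma Pf_pos: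
  assumes "x > 0" "1 + c*x^N > 0" "N > 0"
  shows "Pf N c x > 0" "(Pf N c x)^N = x^N / (1 + c*x^N)" "1 / (Pf N c x)^N = 1/x^N + c"
proof -
  show p: "Pf N c x > 0" using assms unfolding Pf_def by simp
  have "(Pf N c x)^N = x^N * ((1 + c*x^N) powr (-1/N))^N"
    using assms unfolding Pf_def by (simp add: power_mult_distrib)
  also have "((1 + c*x^N) powr (-1/N))^N = (1 + c*x^N) powr (-1)"
    using assms by (simp add: powr_power)
  also have "\<dots> = 1 / (1 + c*x^N)" using assms by (simp add: powr_minus divide_inverse)
  finally show e: "(Pf N c x)^N = x^N / (1 + c*x^N)" by simp
  show "1 / (Pf N c x)^N = 1/x^N + c" unfolding e using assms by (simp add: field_simps)
qed

lemma Pf_cont: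
  assumes "\<forall>x\<in>{0..q}. 1 + c*x^N > 0"
  shows "continuous_on {p..q} (Pf N c)"
proof -
  have e: "Pf N c = (\<lambda>x. if x \<le> 0 then x else x * (1 + c*x^N) powr (-1/N))"
    unfolding Pf_def by auto
  show ?thesis unfolding e
  proof (rule continuous_on_cases_1)
    show "continuous_on {t \<in> {p..q}. t \<le> 0} (\<lambda>x. x)" by (intro continuous_intros)
    show "continuous_on {t \<in> {p..q}. 0 \<le> t} (\<lambda>x. x * (1 + c * x ^ N) powr (- 1 / real N))"
    proof -
      have pos: "\<forall>x\<in>{t \<in> {p..q}. 0 \<le> t}. 1 + c * x ^ N \<noteq> 0" using assms by force
      show ?thesis by (intro continuous_intros pos)
    qed
    show "0 \<in> {p..q} \<Longrightarrow> 0 = 0 * (1 + c * 0 ^ N) powr (- 1 / real N)" by simp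
  qed
qed

lemma vx_conv:
  fixes x e R1 \<eta> :: real
  assumes "x < 0" "-R1 \<le> x" "e < 0" "\<bar>1/e - 1/x\<bar> \<le> \<eta>" "\<eta> \<le> 1/(2*R1)"
  shows "\<bar>e - x\<bar> \<le> 2*R1^2*\<eta>"
proof -
  have R1: "R1 > 0" using assms by linarith
  have ax: "\<bar>x\<bar> \<le> R1" using assms by linarith
  have "1/\<bar>x\<bar> \<ge> 1/R1" using ax assms R1 by (intro frac_le) auto
  have "\<bar>1/e\<bar> \<ge> 1/\<bar>x\<bar> - \<eta>" using assms(4) abs_triangle_ineq2[of "1/x" "1/e"]
    by (simp add: abs_minus_commute)
  then have "\<bar>1/e\<bar> \<ge> 1/(2*R1)" using \<open>1/\<bar>x\<bar> \<ge> 1/R1\<close> assms(5) by (simp add: field_simps)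
  then have ae: "\<bar>e\<bar> \<le> 2*R1" using R1 assms(3)
    by (simp add: field_simps abs_if split: if_splits)
  have "1/e - 1/x = (x - e)/(e*x)" using assms by (simp add: field_simps)
  then have "\<bar>e\<bar> * \<bar>x\<bar> * \<bar>1/e - 1/x\<bar> = \<bar>x - e\<bar>" using assms by (simp add: abs_mult)
  then have "\<bar>e - x\<bar> = \<bar>e\<bar> * \<bar>x\<bar> * \<bar>1/e - 1/x\<bar>" by (simp add: abs_minus_commute)
  also have "\<dots> \<le> (2*R1) * R1 * \<eta>"
    by (intro mult_mono ae ax assms(4)) (use R1 in auto)
  finally show ?thesis by (simp add: power2_eq_square)
qed

lemma inv_x1:
  fixes s x :: real
  assumes "s > 0" "x \<noteq> 0"
  shows "1 / Cm (-(s^2)) x = (if x > 0 then 1 else -1) * (s * sqrt (1 + 1/(x* s)^2))"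
proof -
  have k: "1 - (-(s^2))*x^2 > 0" by (smt (verit) mult_minus_left zero_le_power2 mult_nonneg_nonneg)
  have sq: "1 / (Cm (-(s^2)) x)^2 = 1/x^2 + s^2" using Cm_inv[OF assms(2) k] by simp
  have "s * sqrt (1 + 1/(x* s)^2) = sqrt (s^2 * (1 + 1/(x* s)^2))"
    using assms by (simp add: real_sqrt_mult)
  also have "s^2 * (1 + 1/(x* s)^2) = 1/x^2 + s^2" using assms by (simp add: field_simps power2_eq_square)
  finally have e: "s * sqrt (1 + 1/(x* s)^2) = sqrt (1 / (Cm (-(s^2)) x)^2)" using sq by simp
  have "sqrt (1 / (Cm (-(s^2)) x)^2) = \<bar>1 / Cm (-(s^2)) x\<bar>"
    by (metis power_one_over real_sqrt_abs)
  moreover have "(Cm (-(s^2)) x > 0 \<longleftrightarrow> x > 0) \<and> (Cm (-(s^2)) x < 0 \<longleftrightarrow> x < 0)" using Cm_sgn[OF k] .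
  ultimately show ?thesis using e assms(2) by (auto simp: abs_if)
qed

lemma base_calc:
  fixes s \<alpha> x :: real
  assumes s: "s > 0" and x: "x \<noteq> 0" and sa: "\<bar>\<alpha>\<bar> < 2* s^2"
  defines "w \<equiv> [SC (-(s^2)), SQ (\<alpha>/(2* s)), SC (s^2 + \<alpha> + (\<alpha>/(2* s))^2)]"
  defines "\<rho> \<equiv> sqrt (1 + 1/(x* s)^2) - 1"
  defines "Ev \<equiv> 1/x^2 - (if x > 0 then \<alpha>*(\<rho>+1) + \<alpha> else \<alpha> - \<alpha>*(\<rho>+1))"
  shows "admp w x \<longleftrightarrow> Ev > 0" "admp w x \<Longrightarrow> 1/(evw w x)^2 = Ev \<and> (evw w x > 0 \<longleftrightarrow> x > 0) \<and> (evw w x < 0 \<longleftrightarrow> x < 0)"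
proof -
  define x1 where "x1 = Cm (-(s^2)) x"
  define a where "a = \<alpha>/(2* s)"
  define b where "b = \<alpha> + a^2"
  have k1: "1 - (-(s^2))*x^2 > 0" by (smt (verit) mult_minus_left zero_le_power2 mult_nonneg_nonneg)
  have ok1: "okp (SC (-(s^2))) x" using k1 by (simp add: okp_def)
  have sq1: "1 / x1^2 = 1/x^2 + s^2" using Cm_inv[OF x k1] unfolding x1_def by simp
  have sg1: "(x1 > 0 \<longleftrightarrow> x > 0) \<and> (x1 < 0 \<longleftrightarrow> x < 0)" using Cm_sgn[OF k1] unfolding x1_def .
  have x10: "x1 \<noteq> 0" using sg1 x by (metis linorder_neqE_linordered_idom order_less_irrefl)
  have i1: "1/x1 = (if x > 0 then 1 else -1) * (s * sqrt (1 + 1/(x* s)^2))"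
    using inv_x1[OF s x] unfolding x1_def .
  have x1b: "x1^2 < 1/s^2"
  proof -
    have "1/x1^2 > s^2" using sq1 x by simp
    then show ?thesis using x10 s by (simp add: field_simps)
  qed
  have ax1: "\<bar>x1\<bar> < 1/s"
  proof -
    have "\<bar>x1\<bar>^2 < (1/s)^2" using x1b by (simp add: power_divide)
    then show ?thesis using s by (smt (verit) power_mono zero_le_divide_1_iff)
  qed
  have k2: "1 - a*x1 > 0"
  proof -
    have "\<bar>a*x1\<bar> = \<bar>\<alpha>\<bar>/(2* s) * \<bar>x1\<bar>" unfolding a_def using s by (simp add: abs_mult)
    also have "\<dots> \<le> \<bar>\<alpha>\<bar>/(2* s) * (1/s)" using ax1 s by (intro mult_left_mono) auto
    also have "\<dots> = \<bar>\<alpha>\<bar>/(2* s^2)" by (simp add: power2_eq_square)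
    also have "\<dots> < 1" using sa s by simp
    finally show ?thesis by (smt (verit) abs_ge_self)
  qed
  have ok2: "okp (SQ a) x1" using k2 by (simp add: okp_def)
  define x2 where "x2 = Qm a x1"
  have i2: "1/x2 = 1/x1 - a" using Qm_inv[OF x10 k2] unfolding x2_def .
  have sg2: "(x2 > 0 \<longleftrightarrow> x > 0) \<and> (x2 < 0 \<longleftrightarrow> x < 0)" using Qm_sgn[OF k2] sg1 unfolding x2_def by auto
  have x20: "x2 \<noteq> 0" using sg2 x by (metis linorder_neqE_linordered_idom order_less_irrefl)
  have key: "1/x2^2 - (s^2 + b) = Ev"
  proof -
    have "1/x2^2 = (1/x1 - a)^2" using i2 by (metis power_one_over)
    also have "\<dots> = 1/x1^2 - 2*a*(1/x1) + a^2" by (simp add: power2_diff power_one_over)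
    finally have "1/x2^2 - (s^2 + b) = 1/x^2 - 2*a*(1/x1) - \<alpha>" using sq1 unfolding b_def by simp
    also have "2*a*(1/x1) = (if x > 0 then 1 else -1) * (\<alpha> * (\<rho>+1))"
      unfolding i1 a_def \<rho>_def using s by (simp add: field_simps)
    finally show ?thesis unfolding Ev_def by (auto simp: algebra_simps)
  qed
  have e3: "okp (SC (s^2 + b)) x2 \<longleftrightarrow> Ev > 0"
  proof -
    have "okp (SC (s^2 + b)) x2 \<longleftrightarrow> (s^2+b)*x2^2 < 1" by (simp add: okp_def)
    also have "\<dots> \<longleftrightarrow> s^2 + b < 1/x2^2" using x20 by (simp add: field_simps)
    finally show ?thesis using key by linarith
  qed
  have wx: "admp w x \<longleftrightarrow> okp (SC (s^2 + b)) x2"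
    unfolding w_def using ok1 ok2 by (simp add: x1_def[symmetric] a_def[symmetric] x2_def[symmetric] b_def add.assoc)
  show "admp w x \<longleftrightarrow> Ev > 0" using wx e3 by simp
  assume "admp w x"
  then have k3: "1 - (s^2+b)*x2^2 > 0" using wx by (simp add: okp_def)
  have ev: "evw w x = Cm (s^2+b) x2"
    unfolding w_def by (simp add: x1_def[symmetric] a_def[symmetric] x2_def[symmetric] b_def add.assoc)
  have "1/(evw w x)^2 = Ev" unfolding ev using Cm_inv[OF x20 k3] key by simp
  moreover have "(evw w x > 0 \<longleftrightarrow> x > 0) \<and> (evw w x < 0 \<longleftrightarrow> x < 0)"
    unfolding ev using Cm_sgn[OF k3] sg2 by auto
  ultimately show "1/(evw w x)^2 = Ev \<and> (evw w x > 0 \<longleftrightarrow> x > 0) \<and> (evw w x < 0 \<longleftrightarrow> x < 0)" by simp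
qed

lemma diff_le_sqrt_sq:
  fixes z P :: real assumes "z \<ge> 0" "P \<ge> 0"
  shows "\<bar>z - P\<bar> \<le> sqrt \<bar>z^2 - P^2\<bar>"
proof -
  have zp: "\<bar>z - P\<bar> \<le> z + P" using assms by (simp add: abs_le_iff)
  have "\<bar>z - P\<bar>^2 = \<bar>z - P\<bar> * \<bar>z - P\<bar>" by (simp add: power2_eq_square)
  also have "\<dots> \<le> \<bar>z - P\<bar> * (z + P)" using zp by (intro mult_left_mono) auto
  also have "\<dots> = \<bar>z^2 - P^2\<bar>"
  proof -
    have "z^2 - P^2 = (z - P)*(z+P)" by (simp add: algebra_simps power2_eq_square)
    then show ?thesis using assms by (simp add: abs_mult)
  qed
  finally show ?thesis by (simp add: real_le_rsqrt)
qed

lemma sqrt_diff_le: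
  fixes a b :: real assumes "a \<ge> 0" "b > 0"
  shows "\<bar>sqrt a - sqrt b\<bar> \<le> \<bar>a - b\<bar> / sqrt b"
proof -
  have sb: "sqrt b > 0" using assms by simp
  have e: "(sqrt a - sqrt b) * (sqrt a + sqrt b) = a - b" using assms by (simp add: algebra_simps)
  have "\<bar>sqrt a - sqrt b\<bar> * (sqrt a + sqrt b) = \<bar>(sqrt a - sqrt b) * (sqrt a + sqrt b)\<bar>"
    using assms by (simp add: abs_mult)
  then have "\<bar>sqrt a - sqrt b\<bar> * (sqrt a + sqrt b) = \<bar>a - b\<bar>" using e by simp
  moreover have "\<bar>sqrt a - sqrt b\<bar> * sqrt b \<le> \<bar>sqrt a - sqrt b\<bar> * (sqrt a + sqrt b)"
    using assms by (intro mult_left_mono) auto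
  ultimately have "\<bar>sqrt a - sqrt b\<bar> * sqrt b \<le> \<bar>a - b\<bar>" by simp
  then show ?thesis using sb by (simp add: field_simps)
qed

lemma rho_bound:
  fixes t :: real assumes "t \<ge> 0"
  shows "0 \<le> sqrt (1 + t^2) - 1" "sqrt (1 + t^2) - 1 \<le> t"
proof -
  show "0 \<le> sqrt (1 + t^2) - 1" by simp
  have "sqrt (1 + t^2) \<le> sqrt ((1+t)^2)" using assms by (intro real_sqrt_le_mono) (simp add: power2_eq_square algebra_simps)
  also have "\<dots> = 1 + t" using assms by simp
  finally show "sqrt (1 + t^2) - 1 \<le> t" by simp
qed

lemma base_level:
  fixes R1 R2 c \<eta> :: real
  assumes R1: "R1 > 0" and R2: "R2 > 0" and cR: "1 + c*R2^2 > 0" and \<eta>: "\<eta> > 0"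
  shows "\<exists>w. adm w {-R1..R2} \<and> (\<forall>x\<in>{0..R2}. \<bar>evw w x - Pf 2 c x\<bar> \<le> \<eta>)
            \<and> (\<forall>x\<in>{-R1..<0}. \<bar>1/evw w x - 1/x\<bar> \<le> \<eta>)"
proof -
  define m where "m = min 1 (1 + c*R2^2)"
  have m: "m > 0" "m \<le> 1" using cR unfolding m_def by auto
  define \<alpha> where "\<alpha> = -c/2"
  define T where "T = 1 + R2/m + R2^3/(m^2*\<eta>^2) + R1 + 1/\<eta>"
  have nn: "0 \<le> R2/m" "0 \<le> R2^3/(m^2*\<eta>^2)" "0 \<le> R1" "0 \<le> 1/\<eta>" using m R1 R2 \<eta> by auto
  have Tc: "R2/m \<le> T" "R2^3/(m^2*\<eta>^2) \<le> T" "R1 \<le> T" "1/\<eta> \<le> T" "1 \<le> T"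
    unfolding T_def using nn by linarith+
  define s where "s = 1 + \<bar>c\<bar> * T"
  have cT: "\<bar>c\<bar> * X \<le> \<bar>c\<bar> * T" if "X \<le> T" for X using that by (intro mult_left_mono) auto
  have s1: "s \<ge> 1" unfolding s_def using Tc by simp
  have sc: "s \<ge> \<bar>c\<bar> * (R2/m)" "s \<ge> \<bar>c\<bar> * (R2^3/(m^2*\<eta>^2))" "s > \<bar>c\<bar> * R1" "s \<ge> \<bar>c\<bar> * (1/\<eta>)" "s > \<bar>c\<bar>"
    using cT[OF Tc(1)] cT[OF Tc(2)] cT[OF Tc(3)] cT[OF Tc(4)] cT[OF Tc(5)] unfolding s_def by auto
  have s0: "s > 0" using s1 by simp
  have sa: "\<bar>\<alpha>\<bar> < 2* s^2"
  proof -
    have "s \<le> s^2" using s1 by (simp add: power2_eq_square)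
    then show ?thesis using sc(5) unfolding \<alpha>_def by simp
  qed
  define w where "w = [SC (-(s^2)), SQ (\<alpha>/(2* s)), SC (s^2 + \<alpha> + (\<alpha>/(2* s))^2)]"
  have P: "admp w x \<and> \<bar>evw w x - Pf 2 c x\<bar> \<le> \<eta>" if x: "x \<in> {0..R2}" for x
  proof (cases "x = 0")
    case True then show ?thesis using \<eta> by simp
  next
    case False
    then have xp: "x > 0" using x by simp
    define \<rho> where "\<rho> = sqrt (1 + 1/(x * s)^2) - 1"
    have \<rho>: "0 \<le> \<rho>" "\<rho> \<le> 1/(x * s)" using rho_bound[of "1/(x * s)"] xp s0 unfolding \<rho>_def
      by (auto simp: power_one_over)
    define A where "A = 1/x^2 + c"
    define e where "e = (c/2)*\<rho>"
    have Ev: "1/x^2 - (if x > 0 then \<alpha>*(\<rho>+1) + \<alpha> else \<alpha> - \<alpha>*(\<rho>+1)) = A + e"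
      using xp unfolding A_def e_def \<alpha>_def by (simp add: field_simps)
    have cx: "1 + c*x^2 \<ge> m"
    proof (cases "c \<ge> 0")
      case True then show ?thesis unfolding m_def by simp
    next
      case False
      have "x^2 \<le> R2^2" using x xp by (simp add: power_mono)
      then have "c*R2^2 \<le> c*x^2" using False by (simp add: mult_left_mono_neg)
      then show ?thesis unfolding m_def by simp
    qed
    have Am: "A \<ge> m/x^2" unfolding A_def using cx xp by (simp add: field_simps)
    have ae: "\<bar>e\<bar> \<le> (\<bar>c\<bar>/2)/(x * s)"
    proof -
      have "\<bar>c\<bar> * \<rho> \<le> \<bar>c\<bar> * (1/(x * s))" using \<rho> by (intro mult_left_mono) auto
      then show ?thesis unfolding e_def using \<rho> by (simp add: abs_mult)
    qed
    have ae2: "\<bar>e\<bar> \<le> A/2"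
    proof -
      have "\<bar>c\<bar> * x \<le> m * s"
      proof -
        have "\<bar>c\<bar> * x \<le> \<bar>c\<bar> * R2" using x by (intro mult_left_mono) auto
        also have "\<dots> \<le> m * s" using sc(1) m by (simp add: field_simps)
        finally show ?thesis .
      qed
      then have "(\<bar>c\<bar>/2)/(x * s) \<le> (m/x^2)/2" using xp s0 m by (simp add: field_simps power2_eq_square)
      moreover have "(m/x^2)/2 \<le> A/2" using Am by simp
      ultimately show ?thesis using ae by (meson order_trans)
    qed
    have A0: "A > 0" using Am m xp by (smt (verit) divide_pos_pos zero_less_power)
    have ok: "admp w x" using base_calc(1)[OF s0 False sa] Ev A0 ae2 unfolding w_def \<rho>_def by auto
    have r: "1/(evw w x)^2 = A + e" "evw w x > 0"
      using base_calc(2)[OF s0 False sa] ok Ev xp unfolding w_def \<rho>_def by auto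
    have pf: "Pf 2 c x > 0" "1/(Pf 2 c x)^2 = A"
      using Pf_pos[of x c 2] xp cx m unfolding A_def by auto
    have z2: "(evw w x)^2 = 1/(A + e)" using r(1) by (metis divide_divide_eq_right div_by_1 mult_1 nonzero_mult_div_cancel_left zero_neq_one)
    have p2: "(Pf 2 c x)^2 = 1/A" using pf(2) by (metis divide_divide_eq_right div_by_1 mult_1 nonzero_mult_div_cancel_left zero_neq_one)
    have "\<bar>(evw w x)^2 - (Pf 2 c x)^2\<bar> = \<bar>e\<bar>/(A*(A+e))"
    proof -
      have AE: "A + e > 0" using ae2 A0 by (auto simp: abs_le_iff)
      have "1/(A+e) - 1/A = -e/(A*(A+e))" using A0 AE by (simp add: field_simps)
      moreover have "\<bar>-e/(A*(A+e))\<bar> = \<bar>e\<bar>/(A*(A+e))" using A0 AE by (simp add: abs_divide abs_mult)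
      ultimately show ?thesis unfolding z2 p2 by simp
    qed
    also have "\<dots> \<le> \<bar>e\<bar>/(A*(A/2))"
      using A0 ae2 by (intro divide_left_mono mult_left_mono mult_pos_pos) (auto simp: abs_le_iff)
    also have "\<dots> = 2*\<bar>e\<bar>/A^2" by (simp add: power2_eq_square)
    also have "\<dots> \<le> 2*((\<bar>c\<bar>/2)/(x * s)) / (m/x^2)^2"
      using ae Am m xp by (intro divide_mono mult_left_mono power_mono) auto
    also have "\<dots> = \<bar>c\<bar> * x^3 / (s * m^2)" using xp m s0 by (simp add: field_simps power2_eq_square power3_eq_cube)
    also have "\<dots> \<le> \<bar>c\<bar> * R2^3 / (s * m^2)"
      using x xp s0 m by (intro divide_right_mono mult_left_mono power_mono) auto
    also have "\<dots> \<le> \<eta>^2"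
    proof -
      have "\<bar>c\<bar> * (R2^3/(m^2*\<eta>^2)) \<le> s" by (rule sc(2))
      then have "\<bar>c\<bar> * R2^3 \<le> s * (m^2 * \<eta>^2)" using m \<eta> by (simp add: field_simps)
      then show ?thesis using s0 m by (simp add: field_simps)
    qed
    finally have "\<bar>evw w x - Pf 2 c x\<bar> \<le> sqrt (\<eta>^2)"
      using diff_le_sqrt_sq[of "evw w x" "Pf 2 c x"] r(2) pf(1)
      by (smt (verit) real_sqrt_le_mono)
    then show ?thesis using ok \<eta> by simp
  qed
  have N: "admp w x \<and> \<bar>1/evw w x - 1/x\<bar> \<le> \<eta>" if x: "x \<in> {-R1..<0}" for x
  proof -
    have xn: "x < 0" "x \<noteq> 0" using x by auto
    define \<rho> where "\<rho> = sqrt (1 + 1/(x * s)^2) - 1"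
    have ax: "\<bar>x\<bar> \<le> R1" "\<bar>x\<bar> > 0" using x by auto
    have \<rho>: "0 \<le> \<rho>" "\<rho> \<le> 1/(\<bar>x\<bar> * s)" using rho_bound[of "1/(\<bar>x\<bar> * s)"] ax s0 unfolding \<rho>_def
      by (auto simp: power_one_over power_mult_distrib)
    define e where "e = \<alpha>*\<rho>"
    have Ev: "1/x^2 - (if x > 0 then \<alpha>*(\<rho>+1) + \<alpha> else \<alpha> - \<alpha>*(\<rho>+1)) = 1/x^2 + e"
      using xn unfolding e_def by (simp add: algebra_simps)
    have ae: "\<bar>e\<bar> \<le> (\<bar>c\<bar>/2)/(\<bar>x\<bar> * s)"
    proof -
      have "\<bar>c\<bar> * \<rho> \<le> \<bar>c\<bar> * (1/(\<bar>x\<bar> * s))" using \<rho> by (intro mult_left_mono) auto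
      then show ?thesis unfolding e_def \<alpha>_def using \<rho> by (simp add: abs_mult)
    qed
    have ae2: "\<bar>e\<bar> < 1/x^2"
    proof -
      have "\<bar>c\<bar> * \<bar>x\<bar> < 2 * s"
      proof -
        have "\<bar>c\<bar> * \<bar>x\<bar> \<le> \<bar>c\<bar> * R1" using ax by (intro mult_left_mono) auto
        then show ?thesis using sc(3) s0 by linarith
      qed
      then have "(\<bar>c\<bar>/2)/(\<bar>x\<bar> * s) < 1/\<bar>x\<bar>^2"
      proof -
        assume h: "\<bar>c\<bar> * \<bar>x\<bar> < 2 * s"
        have "(\<bar>c\<bar>/2)/(\<bar>x\<bar> * s) = (\<bar>c\<bar> * \<bar>x\<bar>) / (2 * s * \<bar>x\<bar>^2)"
          using ax s0 by (simp add: field_simps power2_eq_square)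
        also have "\<dots> < (2 * s) / (2 * s * \<bar>x\<bar>^2)"
          using h ax s0 by (intro divide_strict_right_mono) auto
        also have "\<dots> = 1/\<bar>x\<bar>^2" using s0 by simp
        finally show ?thesis .
      qed
      then show ?thesis using ae by simp
    qed
    have E0: "1/x^2 + e > 0" using ae2 by linarith
    have ok: "admp w x" using base_calc(1)[OF s0 xn(2) sa] Ev E0 unfolding w_def \<rho>_def by auto
    have r: "1/(evw w x)^2 = 1/x^2 + e" "evw w x < 0"
      using base_calc(2)[OF s0 xn(2) sa] ok Ev xn unfolding w_def \<rho>_def by auto
    have i1: "1/evw w x = - sqrt (1/x^2 + e)"
    proof -
      have "sqrt (1/(evw w x)^2) = \<bar>1/evw w x\<bar>" by (metis power_one_over real_sqrt_abs)
      then show ?thesis using r by simp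
    qed
    have i2: "1/x = - sqrt (1/x^2)"
    proof -
      have "sqrt (1/x^2) = \<bar>1/x\<bar>" by (metis power_one_over real_sqrt_abs)
      then show ?thesis using xn by simp
    qed
    have "\<bar>1/evw w x - 1/x\<bar> = \<bar>sqrt (1/x^2 + e) - sqrt (1/x^2)\<bar>" unfolding i1 i2 by simp
    also have "\<dots> \<le> \<bar>e\<bar> / sqrt (1/x^2)" using sqrt_diff_le[of "1/x^2 + e" "1/x^2"] E0 xn by simp
    also have "\<dots> = \<bar>e\<bar> * \<bar>x\<bar>" by (simp add: real_sqrt_divide)
    also have "\<dots> \<le> ((\<bar>c\<bar>/2)/(\<bar>x\<bar> * s)) * \<bar>x\<bar>" using ae by (intro mult_right_mono) auto
    also have "\<dots> = \<bar>c\<bar>/(2* s)" using ax by simp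
    also have "\<dots> \<le> \<eta>"
    proof -
      have "\<bar>c\<bar> * (1/\<eta>) \<le> s" by (rule sc(4))
      then have "\<bar>c\<bar> \<le> s * \<eta>" using \<eta> by (simp add: field_simps)
      then show ?thesis using s0 \<eta> by (simp add: field_simps)
    qed
    finally show ?thesis using ok by simp
  qed
  have "adm w {-R1..R2}"
    unfolding adm_def
  proof
    fix x assume "x \<in> {-R1..R2}"
    then show "admp w x" using P N by (cases "x < 0") auto
  qed
  then show ?thesis using P N by blast
qed

lemma zoom_fwd:
  fixes s x :: real
  assumes s: "s > 0" and x: "x \<noteq> 0"
  defines "x2 \<equiv> evw [SC (-(s^2)), SQ s] x"
  shows "admp [SC (-(s^2)), SQ s] x" "x2 \<noteq> 0" "(x2 > 0 \<longleftrightarrow> x > 0)"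
    "(2* s/x2)^2/(4* s^2) + 2* s/x2 = 1/x^2"
proof -
  define x1 where "x1 = Cm (-(s^2)) x"
  have k1: "1 - (-(s^2))*x^2 > 0" by (smt (verit) mult_minus_left zero_le_power2 mult_nonneg_nonneg)
  have sq1: "1 / x1^2 = 1/x^2 + s^2" using Cm_inv[OF x k1] unfolding x1_def by simp
  have sg1: "(x1 > 0 \<longleftrightarrow> x > 0) \<and> (x1 < 0 \<longleftrightarrow> x < 0)" using Cm_sgn[OF k1] unfolding x1_def .
  have x10: "x1 \<noteq> 0" using sg1 x by (metis linorder_neqE_linordered_idom order_less_irrefl)
  have x1b: "x1^2 < 1/s^2"
  proof -
    have "1/x1^2 > s^2" using sq1 x by simp
    then show ?thesis using x10 s by (simp add: field_simps)
  qed
  have ax1: "\<bar>x1\<bar> < 1/s"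
  proof -
    have "\<bar>x1\<bar>^2 < (1/s)^2" using x1b by (simp add: power_divide)
    then show ?thesis using s by (smt (verit) power_mono zero_le_divide_1_iff)
  qed
  have k2: "1 - s*x1 > 0"
  proof -
    have "s*x1 \<le> s*\<bar>x1\<bar>" using s by (intro mult_left_mono) auto
    also have "\<dots> < s*(1/s)" using ax1 s by (intro mult_strict_left_mono) auto
    finally show ?thesis using s by simp
  qed
  show "admp [SC (-(s^2)), SQ s] x" using k1 k2 by (simp add: okp_def x1_def[symmetric])
  have e2: "x2 = Qm s x1" unfolding x2_def x1_def by simp
  have i2: "1/x2 = 1/x1 - s" using Qm_inv[OF x10 k2] e2 by simp
  have sg2: "(x2 > 0 \<longleftrightarrow> x > 0) \<and> (x2 < 0 \<longleftrightarrow> x < 0)" using Qm_sgn[OF k2] sg1 e2 by auto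
  then show "x2 \<noteq> 0" using x by (metis linorder_neqE_linordered_idom order_less_irrefl)
  show "(x2 > 0 \<longleftrightarrow> x > 0)" using sg2 by simp
  have "2* s/x2 = 2* s*(1/x1 - s)" using i2 by (metis times_divide_eq_right mult.right_neutral)
  then have "(2* s/x2)^2/(4* s^2) + 2* s/x2 = (1/x1 - s)^2 + 2* s*(1/x1 - s)"
    using s by (simp add: power_mult_distrib)
  also have "\<dots> = 1/x1^2 - s^2" by (simp add: power2_diff power_one_over algebra_simps power2_eq_square)
  also have "\<dots> = 1/x^2" using sq1 by simp
  finally show "(2* s/x2)^2/(4* s^2) + 2* s/x2 = 1/x^2" .
qed

lemma zoom_bwd:
  fixes s y :: real
  assumes s: "s > 0" and y: "y \<noteq> 0" and c: "y > 0 \<or> 1/y < -4* s^2"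
  defines "z \<equiv> evw [SQ (-s), SC (s^2)] (2* s*y)"
  shows "admp [SQ (-s), SC (s^2)] (2* s*y)" "z \<noteq> 0" "(z > 0 \<longleftrightarrow> y > 0)"
    "1/z^2 = (1/y)^2/(4* s^2) + 1/y"
proof -
  define x3 where "x3 = 2* s*y"
  have x30: "x3 \<noteq> 0" using s y unfolding x3_def by simp
  have k3: "1 - (-s)*x3 > 0"
  proof (cases "y > 0")
    case True then show ?thesis using s unfolding x3_def by (simp add: add_pos_pos)
  next
    case False
    then have yn: "y < 0" using y by simp
    have "1/y < -2* s^2" using c False s by (smt (verit) zero_le_power2)
    then have "1 > -2* s^2*y" using yn by (simp add: field_simps)
    then show ?thesis unfolding x3_def by (simp add: algebra_simps power2_eq_square)
  qed
  define x4 where "x4 = Qm (-s) x3"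
  have i4: "1/x4 = 1/x3 + s" using Qm_inv[OF x30 k3] unfolding x4_def by simp
  have sg4: "(x4 > 0 \<longleftrightarrow> y > 0) \<and> (x4 < 0 \<longleftrightarrow> y < 0)"
    using Qm_sgn[OF k3] s unfolding x4_def x3_def by (auto simp: zero_less_mult_iff mult_less_0_iff)
  have x40: "x4 \<noteq> 0" using sg4 y by (metis linorder_neqE_linordered_idom order_less_irrefl)
  have i4': "1/x4 = (1/y)/(2* s) + s" using i4 s unfolding x3_def by (simp add: field_simps)
  have big: "1/x4^2 > s^2"
  proof (cases "y > 0")
    case True
    then have "1/x4 > s" using i4' s by simp
    then have "(1/x4)^2 > s^2" using s power_strict_mono[of s "1/x4" 2] by simp
    then show ?thesis by (simp add: power_one_over)
  next
    case False
    then have "1/y < -4* s^2" using c by simp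
    then have "(1/y)/(2* s) < (-4* s^2)/(2* s)" using s by (intro divide_strict_right_mono) auto
    then have "(1/y)/(2* s) < -2* s" using s by (simp add: power2_eq_square)
    then have "1/x4 < -s" using i4' by simp
    then have "(-(1/x4))^2 > s^2" using s power_strict_mono[of s "-(1/x4)" 2] by simp
    then show ?thesis by (simp add: power_one_over)
  qed
  have k4: "1 - s^2*x4^2 > 0"
  proof -
    have "s^2 * x4^2 < 1" using big x40 by (simp add: field_simps)
    then show ?thesis by simp
  qed
  show "admp [SQ (-s), SC (s^2)] (2* s*y)"
    using k3 k4 unfolding x3_def[symmetric] by (simp add: okp_def x4_def[symmetric])
  have ez: "z = Cm (s^2) x4" unfolding z_def x4_def x3_def by simp
  have sgz: "(z > 0 \<longleftrightarrow> y > 0) \<and> (z < 0 \<longleftrightarrow> y < 0)" using Cm_sgn[OF k4] sg4 ez by auto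
  then show "z \<noteq> 0" using y by (metis linorder_neqE_linordered_idom order_less_irrefl)
  show "(z > 0 \<longleftrightarrow> y > 0)" using sgz by simp
  have "1/z^2 = 1/x4^2 - s^2" using Cm_inv[OF x40 k4] ez by simp
  also have "\<dots> = ((1/y)/(2* s) + s)^2 - s^2" using i4' by (metis power_one_over)
  also have "\<dots> = (1/y)^2/(4* s^2) + 1/y" using s y by (simp add: power2_eq_square field_simps)
  finally show "1/z^2 = (1/y)^2/(4* s^2) + 1/y" .
qed

definition Zw :: "real \<Rightarrow> stp list \<Rightarrow> stp list" where
  "Zw s W = [SC (-(s^2)), SQ s] @ map (scl (2* s)) W @ [SQ (-s), SC (s^2)]"

lemma Zw_eval:
  fixes x :: real
  assumes s: "s > 0"
  defines "x2 \<equiv> evw [SC (-(s^2)), SQ s] x"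
  shows "evw (Zw s W) x = evw [SQ (-s), SC (s^2)] (2* s * evw W (x2/(2* s)))"
    "admp (Zw s W) x \<longleftrightarrow> admp [SC (-(s^2)), SQ s] x \<and> admp W (x2/(2* s)) \<and> admp [SQ (-s), SC (s^2)] (2* s * evw W (x2/(2* s)))"
proof -
  have e: "x2 = (2* s) * (x2/(2* s))" using s by simp
  have ev: "evw (map (scl (2* s)) W) x2 = 2* s * evw W (x2/(2* s))"
    using evw_scl(1)[of "2* s" W "x2/(2* s)"] s e by simp
  have ad: "admp (map (scl (2* s)) W) x2 = admp W (x2/(2* s))"
    using evw_scl(2)[of "2* s" W "x2/(2* s)"] s e by simp
  show "evw (Zw s W) x = evw [SQ (-s), SC (s^2)] (2* s * evw W (x2/(2* s)))"
    unfolding Zw_def using ev unfolding x2_def by simp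
  show "admp (Zw s W) x \<longleftrightarrow> admp [SC (-(s^2)), SQ s] x \<and> admp W (x2/(2* s)) \<and> admp [SQ (-s), SC (s^2)] (2* s * evw W (x2/(2* s)))"
    unfolding Zw_def admp_append evw_append x2_def[symmetric] ev ad by (rule refl)
qed

lemma sqrt_diff_le2:
  fixes a b :: real assumes "a \<ge> 0" "b \<ge> 0"
  shows "\<bar>sqrt a - sqrt b\<bar> \<le> sqrt \<bar>a - b\<bar>"
  using diff_le_sqrt_sq[of "sqrt a" "sqrt b"] assms by simp

lemma Pf_double:
  assumes "x > 0" "1 + c*x^(2*N) > 0" "N > 0"
  shows "Pf (2*N) c x = sqrt (Pf N c (x^2))"
proof -
  have b: "1 + c*(x^2)^N > 0" using assms by (simp add: power_mult)
  have "Pf N c (x^2) = x^2 * (1 + c*x^(2*N)) powr (-1/N)"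
    using assms unfolding Pf_def by (simp add: power_mult)
  then have "sqrt (Pf N c (x^2)) = x * sqrt ((1 + c*x^(2*N)) powr (-1/N))"
    using assms by (simp add: real_sqrt_mult)
  also have "sqrt ((1 + c*x^(2*N)) powr (-1/N)) = (1 + c*x^(2*N)) powr (-1/(2*N))"
    using assms by (simp add: sqrt_def root_powr_inverse powr_powr) (simp add: powr_powr field_simps)
  finally show ?thesis unfolding Pf_def using assms by simp
qed

lemma zoom_y:
  fixes s x :: real
  assumes s: "s > 0" and x: "x \<noteq> 0"
  defines "y \<equiv> evw [SC (-(s^2)), SQ s] x / (2* s)"
  shows "y \<noteq> 0" "(y > 0 \<longleftrightarrow> x > 0)" "(1/y)^2/(4* s^2) + 1/y = 1/x^2"
proof -
  note f = zoom_fwd[OF s x]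
  have e: "2* s / evw [SC (-(s^2)), SQ s] x = 1/y" unfolding y_def by simp
  show "y \<noteq> 0" using f(2) s unfolding y_def by simp
  show "(y > 0 \<longleftrightarrow> x > 0)" using f(3) s unfolding y_def by (simp add: zero_less_divide_iff)
  show "(1/y)^2/(4* s^2) + 1/y = 1/x^2" using f(4) unfolding e .
qed

lemma zoom_P_close:
  fixes s x y :: real
  assumes s: "s > 0" and x: "x > 0" and y: "y > 0" and id: "(1/y)^2/(4* s^2) + 1/y = 1/x^2"
  shows "x^2 \<le> y" "y \<le> x^2 + 1/(4* s^2)"
proof -
  have "1/x^2 = (1 + 4* s^2*y)/(4* s^2*y^2)" using id s y by (simp add: field_simps power2_eq_square)
  then have x2: "x^2 = 4* s^2*y^2/(1 + 4* s^2*y)"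
  proof -
    assume h: "1/x^2 = (1 + 4* s^2*y)/(4* s^2*y^2)"
    have "x^2 = 1/(1/x^2)" by simp
    also have "\<dots> = 4* s^2*y^2/(1 + 4* s^2*y)" unfolding h by simp
    finally show ?thesis .
  qed
  have p: "1 + 4* s^2*y > 0" using s y by (simp add: add_pos_pos)
  have d: "y - x^2 = y/(1 + 4* s^2*y)" unfolding x2 using s y p by (simp add: field_simps power2_eq_square)
  have "y/(1 + 4* s^2*y) > 0" using p y by simp
  then show "x^2 \<le> y" using d by simp
  have "y/(1 + 4* s^2*y) \<le> y/(4* s^2*y)" using s y p by (intro divide_left_mono) auto
  also have "\<dots> = 1/(4* s^2)" using y by simp
  finally show "y \<le> x^2 + 1/(4* s^2)" using d by simp
qed

lemma zoom_P_out:
  fixes s y z :: real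
  assumes s: "s > 0" and y: "y > 0" and z: "z > 0" and id: "1/z^2 = (1/y)^2/(4* s^2) + 1/y"
  shows "\<bar>z - sqrt y\<bar> \<le> 1/(2* s)"
proof -
  have "1/z^2 = (1 + 4* s^2*y)/(4* s^2*y^2)" using id s y by (simp add: field_simps power2_eq_square)
  then have z2: "z^2 = 4* s^2*y^2/(1 + 4* s^2*y)"
  proof -
    assume h: "1/z^2 = (1 + 4* s^2*y)/(4* s^2*y^2)"
    have "z^2 = 1/(1/z^2)" by simp
    also have "\<dots> = 4* s^2*y^2/(1 + 4* s^2*y)" unfolding h by simp
    finally show ?thesis .
  qed
  have p: "1 + 4* s^2*y > 0" using s y by (simp add: add_pos_pos)
  have d: "y - z^2 = y/(1 + 4* s^2*y)" unfolding z2 using s y p by (simp add: field_simps power2_eq_square)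
  have "y/(1 + 4* s^2*y) \<le> y/(4* s^2*y)" using s y p by (intro divide_left_mono) auto
  also have "\<dots> = 1/(4* s^2)" using y by simp
  finally have "y - z^2 \<le> 1/(4* s^2)" using d by simp
  moreover have "y - z^2 \<ge> 0" using d y p by simp
  ultimately have "\<bar>z^2 - (sqrt y)^2\<bar> \<le> 1/(4* s^2)" using y by simp
  then have "sqrt \<bar>z^2 - (sqrt y)^2\<bar> \<le> sqrt (1/(4* s^2))" by (rule real_sqrt_le_mono)
  also have "sqrt (1/(4* s^2)) = 1/(2* s)" using s by (simp add: real_sqrt_divide real_sqrt_mult)
  finally show ?thesis using diff_le_sqrt_sq[of z "sqrt y"] z y by simp
qed

lemma zoom_N_bounds:
  fixes s x u :: real
  assumes s: "s > 0" and x: "x < 0" and R1: "-R1 \<le> x" and sR: "s * R1 \<ge> 1"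
    and u: "u > 0" and id: "u^2/(4* s^2) - u = 1/x^2"
  shows "u \<ge> 4* s^2 + 1/(2*R1^2)" "u \<le> 4* s^2 + 2* s/\<bar>x\<bar>"
proof -
  have R1p: "R1 > 0" using x R1 by linarith
  have ax: "0 < \<bar>x\<bar>" "\<bar>x\<bar> \<le> R1" using x R1 by auto
  have key: "u * (u - 4* s^2) = 4* s^2/x^2" using id s by (simp add: field_simps power2_eq_square)
  have pos: "u * (u - 4* s^2) > 0" unfolding key using s x by simp
  then have d0: "u - 4* s^2 > 0" using u by (simp add: zero_less_mult_iff)
  show "u \<ge> 4* s^2 + 1/(2*R1^2)"
  proof (rule ccontr)
    assume "\<not> ?thesis"
    then have dl: "u - 4* s^2 < 1/(2*R1^2)" by simp
    have "u * (u - 4* s^2) < (4* s^2 + 1/(2*R1^2)) * (1/(2*R1^2))"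
      using dl d0 u by (intro mult_strict_mono) auto
    also have "\<dots> = 2* s^2/R1^2 + 1/(4*R1^4)" using R1p by (simp add: field_simps power2_eq_square power4_eq_xxxx)
    also have "\<dots> \<le> 4* s^2/R1^2"
    proof -
      have "1 \<le> (s*R1)^2" using sR by (simp add: one_le_power)
      then have "1/(4*R1^4) \<le> s^2/(4*R1^2)" using R1p by (simp add: field_simps power2_eq_square power4_eq_xxxx)
      moreover have "s^2/(4*R1^2) \<le> 2* s^2/R1^2" using R1p by (simp add: field_simps)
      ultimately show ?thesis by (simp add: field_simps)
    qed
    also have "\<dots> \<le> 4* s^2/x^2"
    proof -
      have "\<bar>x\<bar>^2 \<le> R1^2" using ax by (intro power_mono) auto
      then have "x^2 \<le> R1^2" by simp
      then show ?thesis using s x R1p by (intro divide_left_mono) auto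
    qed
    finally show False using key by simp
  qed
  show "u \<le> 4* s^2 + 2* s/\<bar>x\<bar>"
  proof (rule ccontr)
    assume "\<not> ?thesis"
    then have g: "u - 4* s^2 > 2* s/\<bar>x\<bar>" by simp
    have "u * (u - 4* s^2) > (2* s/\<bar>x\<bar>) * (2* s/\<bar>x\<bar>)"
    proof -
      have "4* s^2 \<ge> 0" by simp
      then have "u > 2* s/\<bar>x\<bar>" using g by linarith
      then show ?thesis using g s ax u by (intro mult_strict_mono) auto
    qed
    also have "(2* s/\<bar>x\<bar>) * (2* s/\<bar>x\<bar>) = 4* s^2/x^2" by (simp add: power2_eq_square)
    finally show False using key by simp
  qed
qed

lemma exists_R2':
  fixes c t0 :: real
  assumes "1 + c*t0^N > 0"
  shows "\<exists>t. t > t0 \<and> 1 + c*t^N > 0"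
proof -
  have "isCont (\<lambda>t. 1 + c*t^N) t0" by simp
  then obtain d where d: "d > 0" "\<And>t. norm (t - t0) < d \<Longrightarrow> \<bar>(1 + c*t^N) - (1 + c*t0^N)\<bar> < 1 + c*t0^N"
    using assms unfolding continuous_at_real_range by blast
  have "\<bar>(1 + c*(t0 + d/2)^N) - (1 + c*t0^N)\<bar> < 1 + c*t0^N" using d by simp
  then have "1 + c*(t0 + d/2)^N > 0" by (simp add: abs_less_iff)
  then show ?thesis using d by (intro exI[of _ "t0 + d/2"]) auto
qed

lemma pos_on_interval:
  fixes c q x :: real
  assumes "1 + c*q^N > 0" "0 \<le> x" "x \<le> q"
  shows "1 + c*x^N > 0"
proof (cases "c \<ge> 0")
  case True then show ?thesis using assms by (simp add: add_pos_nonneg)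
next
  case False
  have "x^N \<le> q^N" using assms by (simp add: power_mono)
  then have "c*q^N \<le> c*x^N" using False by (simp add: mult_left_mono_neg)
  then show ?thesis using assms by linarith
qed

lemma zoom_level:
  fixes N :: nat and c R1 R2 \<eta> :: real
  assumes N: "N > 0"
    and IH: "\<And>R1 R2 \<eta>. R1 > 0 \<Longrightarrow> R2 > 0 \<Longrightarrow> 1 + c*R2^N > 0 \<Longrightarrow> \<eta> > 0 \<Longrightarrow>
      \<exists>w. adm w {-R1..R2} \<and> (\<forall>x\<in>{0..R2}. \<bar>evw w x - Pf N c x\<bar> \<le> \<eta>) \<and> (\<forall>x\<in>{-R1..<0}. \<bar>1/evw w x - 1/x\<bar> \<le> \<eta>)"
    and R1: "R1 > 0" and R2: "R2 > 0" and cR: "1 + c*R2^(2*N) > 0" and \<eta>: "\<eta> > 0"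
  shows "\<exists>w. adm w {-R1..R2} \<and> (\<forall>x\<in>{0..R2}. \<bar>evw w x - Pf (2*N) c x\<bar> \<le> \<eta>) \<and> (\<forall>x\<in>{-R1..<0}. \<bar>1/evw w x - 1/x\<bar> \<le> \<eta>)"
proof -
  have "1 + c*(R2^2)^N > 0" using cR by (simp add: power_mult)
  then obtain R2' where R2': "R2' > R2^2" "1 + c*R2'^N > 0" using exists_R2' by blast
  have "R2^2 > 0" using R2 by simp
  then have R2'p: "R2' > 0" using R2' by linarith
  define \<eta>' where "\<eta>' = min (min 1 (1/(4*R1^2))) (min (\<eta>/(2*R1+1)) ((\<eta>/3)^2))"
  have \<eta>': "\<eta>' > 0" "\<eta>' \<le> 1" "\<eta>' \<le> 1/(4*R1^2)" "\<eta>' \<le> \<eta>/(2*R1+1)" "\<eta>' \<le> (\<eta>/3)^2"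
    unfolding \<eta>'_def using R1 \<eta> by auto
  obtain W where W: "adm W {-1..R2'}" "\<forall>x\<in>{0..R2'}. \<bar>evw W x - Pf N c x\<bar> \<le> \<eta>'"
      "\<forall>x\<in>{-1..<0}. \<bar>1/evw W x - 1/x\<bar> \<le> \<eta>'"
    using IH[of 1 R2' \<eta>'] R2'p R2'(2) \<eta>'(1) by auto
  have posI: "\<And>x. x \<in> {0..R2'} \<Longrightarrow> 1 + c*x^N > 0" using pos_on_interval R2'(2) by auto
  have cPf: "continuous_on {0..R2'} (Pf N c)" using Pf_cont posI by blast
  have uc: "uniformly_continuous_on {0..R2'} (Pf N c)" using compact_uniformly_continuous[OF cPf] by simp
  obtain \<delta> where \<delta>: "\<delta> > 0" "\<And>a b. a \<in> {0..R2'} \<Longrightarrow> b \<in> {0..R2'} \<Longrightarrow> dist b a < \<delta> \<Longrightarrow> dist (Pf N c b) (Pf N c a) < (\<eta>/3)^2"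
    using uniformly_continuous_onE[OF uc, of "(\<eta>/3)^2"] \<eta> by (metis zero_less_divide_iff zero_less_numeral zero_less_power)
  define s where "s = 1 + 1/R1 + 1/(R2' - R2^2) + 1/\<delta> + 3/\<eta>"
  have nn: "0 < 1/R1" "0 < 1/(R2' - R2^2)" "0 < 1/\<delta>" "0 < 3/\<eta>" using R1 R2' \<delta> \<eta> by auto
  have sc: "s \<ge> 1" "s \<ge> 1/R1" "s \<ge> 1/(R2' - R2^2)" "s > 1/\<delta>" "s \<ge> 3/\<eta>"
    unfolding s_def using nn by linarith+
  have s0: "s > 0" using sc by simp
  have s4: "s \<le> 4* s^2" using sc(1) by (simp add: power2_eq_square)
  have sR: "s * R1 \<ge> 1" using sc(2) R1 by (simp add: field_simps)
  have b1: "1/(4* s^2) \<le> R2' - R2^2"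
  proof -
    have "1/(R2' - R2^2) \<le> 4* s^2" using sc(3) s4 by linarith
    then show ?thesis using R2' s0 by (simp add: field_simps)
  qed
  have b2: "1/(4* s^2) < \<delta>"
  proof -
    have "1/\<delta> < 4* s^2" using sc(4) s4 by linarith
    then show ?thesis using \<delta> s0 by (simp add: field_simps)
  qed
  have b3: "1/(2* s) \<le> \<eta>/3" using sc(5) s0 \<eta> by (simp add: field_simps)
  have b4: "1/(4* s^2) \<le> 1" using sc(1) s4 by (simp add: field_simps)
  define w where "w = Zw s W"
  have P: "admp w x \<and> \<bar>evw w x - Pf (2*N) c x\<bar> \<le> \<eta>" if x: "x \<in> {0..R2}" for x
  proof (cases "x = 0")
    case True then show ?thesis using \<eta> unfolding w_def by simp
  next
    case False
    then have xp: "x > 0" using x by simp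
    define y where "y = evw [SC (-(s^2)), SQ s] x / (2* s)"
    note zy = zoom_y[OF s0 False, folded y_def]
    have yp: "y > 0" using zy(2) xp by simp
    note cl = zoom_P_close[OF s0 xp yp zy(3)]
    have x2R: "x^2 \<le> R2^2" using x xp by (simp add: power_mono)
    have yR: "y \<in> {0..R2'}" using cl b1 x2R yp by auto
    have x2R': "x^2 \<in> {0..R2'}" using x2R R2' by auto
    have aW: "admp W y" using W(1) yR unfolding adm_def by auto
    define y' where "y' = evw W y"
    have y'p: "y' > 0" using evw_sgn[OF aW] yp unfolding y'_def by simp
    have ey: "\<bar>y' - Pf N c y\<bar> \<le> \<eta>'" using W(2) yR unfolding y'_def by blast
    note bw = zoom_bwd[OF s0 _ disjI1[OF y'p]]
    define z where "z = evw [SQ (-s), SC (s^2)] (2* s*y')"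
    have zp: "z > 0" using bw(3) y'p unfolding z_def by simp
    have zid: "1/z^2 = (1/y')^2/(4* s^2) + 1/y'" using bw(4) y'p unfolding z_def by simp
    have ew: "evw w x = z" "admp w x"
      using Zw_eval[OF s0, of W x] bw(1) aW y'p zoom_fwd(1)[OF s0 False]
      unfolding w_def z_def y'_def y_def by auto
    have t1: "\<bar>z - sqrt y'\<bar> \<le> \<eta>/3" using zoom_P_out[OF s0 y'p zp zid] b3 by linarith
    have p1: "Pf N c y > 0" using Pf_pos(1)[OF yp posI[OF yR] N] .
    have p2: "Pf N c (x^2) > 0" using Pf_pos(1)[of "x^2" c N] xp posI[OF x2R'] N by simp
    have t2: "\<bar>sqrt y' - sqrt (Pf N c y)\<bar> \<le> \<eta>/3"
    proof -
      have "\<bar>sqrt y' - sqrt (Pf N c y)\<bar> \<le> sqrt \<bar>y' - Pf N c y\<bar>" using sqrt_diff_le2 y'p p1 by simp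
      also have "\<dots> \<le> sqrt ((\<eta>/3)^2)" using ey \<eta>'(5) by (intro real_sqrt_le_mono) linarith
      also have "\<dots> = \<eta>/3" using \<eta> by simp
      finally show ?thesis .
    qed
    have t3: "\<bar>sqrt (Pf N c y) - sqrt (Pf N c (x^2))\<bar> \<le> \<eta>/3"
    proof -
      have "dist y (x^2) < \<delta>" using cl b2 by (simp add: dist_real_def)
      then have "dist (Pf N c y) (Pf N c (x^2)) < (\<eta>/3)^2" using \<delta>(2)[OF x2R' yR] by simp
      then have d: "\<bar>Pf N c y - Pf N c (x^2)\<bar> \<le> (\<eta>/3)^2" by (simp add: dist_real_def)
      have "\<bar>sqrt (Pf N c y) - sqrt (Pf N c (x^2))\<bar> \<le> sqrt \<bar>Pf N c y - Pf N c (x^2)\<bar>"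
        using sqrt_diff_le2 p1 p2 by simp
      also have "\<dots> \<le> sqrt ((\<eta>/3)^2)" using d by (intro real_sqrt_le_mono)
      also have "\<dots> = \<eta>/3" using \<eta> by simp
      finally show ?thesis .
    qed
    have pd: "Pf (2*N) c x = sqrt (Pf N c (x^2))"
      using Pf_double[OF xp _ N] pos_on_interval[OF cR, of x] x xp by simp
    have "\<bar>evw w x - Pf (2*N) c x\<bar> \<le> \<eta>" unfolding ew(1) pd using t1 t2 t3 by linarith
    then show ?thesis using ew(2) by simp
  qed
  have Nn: "admp w x \<and> \<bar>1/evw w x - 1/x\<bar> \<le> \<eta>" if x: "x \<in> {-R1..<0}" for x
  proof -
    have xn: "x < 0" "x \<noteq> 0" "-R1 \<le> x" using x by auto
    have ax: "\<bar>x\<bar> > 0" "\<bar>x\<bar> \<le> R1" using x by auto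
    define y where "y = evw [SC (-(s^2)), SQ s] x / (2* s)"
    note zy = zoom_y[OF s0 xn(2), folded y_def]
    have "\<not> y > 0" using zy(2) xn(1) by simp
    then have yn: "y < 0" using zy(1) by linarith
    define u where "u = -1/y"
    have up: "u > 0" unfolding u_def using yn by simp
    have uid: "u^2/(4* s^2) - u = 1/x^2" using zy(3) unfolding u_def by (simp add: power2_eq_square)
    note ub = zoom_N_bounds[OF s0 xn(1) xn(3) sR up uid]
    have yR: "y \<in> {-1..<0}"
    proof -
      have "1/(2*R1^2) \<ge> 0" by simp
      then have "u \<ge> 1" using ub(1) sc(1) s4 by linarith
      then have "-y \<le> 1" unfolding u_def using yn by (simp add: field_simps)
      then show ?thesis using yn by auto
    qed
    have "y \<in> {-1..R2'}" using yR R2'p by auto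
    then have aW: "admp W y" using W(1) unfolding adm_def by blast
    define y' where "y' = evw W y"
    have y'n: "y' < 0" using evw_sgn[OF aW] yn unfolding y'_def by simp
    have ey: "\<bar>1/y' - 1/y\<bar> \<le> \<eta>'" using W(3) yR unfolding y'_def by blast
    define u' where "u' = -1/y'"
    have du: "\<bar>u' - u\<bar> \<le> \<eta>'" using ey unfolding u_def u'_def by (simp add: abs_minus_commute)
    have u'b: "u' > 4* s^2"
    proof -
      have "1/(4*R1^2) < 1/(2*R1^2)" using R1 by (simp add: field_simps)
      then show ?thesis using du ub(1) \<eta>'(3) by (simp add: abs_le_iff)
    qed
    have y'c: "1/y' < -4* s^2" using u'b unfolding u'_def by simp
    note bw = zoom_bwd[OF s0 _ disjI2[OF y'c]]
    define z where "z = evw [SQ (-s), SC (s^2)] (2* s*y')"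
    have y'0: "y' \<noteq> 0" using y'n by simp
    have "z \<noteq> 0" "\<not> z > 0" using bw(2)[OF y'0] bw(3)[OF y'0] y'n unfolding z_def by auto
    then have zn: "z < 0" by linarith
    have zid: "1/z^2 = u'^2/(4* s^2) - u'" using bw(4) y'n unfolding z_def u'_def by (simp add: power2_eq_square)
    have ew: "evw w x = z" "admp w x"
      using Zw_eval[OF s0, of W x] bw(1) aW y'n zoom_fwd(1)[OF s0 xn(2)]
      unfolding w_def z_def y'_def y_def by auto
    have k: "1/z^2 - 1/x^2 = (u' - u) * ((u' + u)/(4* s^2) - 1)"
      unfolding zid uid[symmetric] using s0 by (simp add: field_simps power2_eq_square)
    have f1: "(u' + u)/(4* s^2) - 1 \<ge> 0"
    proof -
      have "u' + u \<ge> 4* s^2" using u'b up by linarith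
      then show ?thesis using s0 by (simp add: field_simps)
    qed
    have f2: "(u' + u)/(4* s^2) - 1 \<le> 1 + 1/(s*\<bar>x\<bar>) + \<eta>'/(4* s^2)"
    proof -
      have "u' + u \<le> 2*u + \<eta>'" using du by (simp add: abs_le_iff)
      also have "\<dots> \<le> 8* s^2 + 4* s/\<bar>x\<bar> + \<eta>'" using ub(2) by simp
      finally have "(u' + u)/(4* s^2) \<le> (8* s^2 + 4* s/\<bar>x\<bar> + \<eta>')/(4* s^2)" using s0 by (intro divide_right_mono) auto
      also have "\<dots> = 2 + 1/(s*\<bar>x\<bar>) + \<eta>'/(4* s^2)" using s0 ax by (simp add: field_simps power2_eq_square)
      finally show ?thesis by simp
    qed
    have e2: "\<bar>1/z^2 - 1/x^2\<bar> \<le> \<eta>' * (1 + 1/(s*\<bar>x\<bar>) + \<eta>'/(4* s^2))"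
      unfolding k abs_mult using du f1 f2 by (simp add: mult_mono)
    have i1: "1/z = - sqrt (1/z^2)"
    proof -
      have "sqrt (1/z^2) = \<bar>1/z\<bar>" by (metis power_one_over real_sqrt_abs)
      then show ?thesis using zn by simp
    qed
    have i2: "1/x = - sqrt (1/x^2)"
    proof -
      have "sqrt (1/x^2) = \<bar>1/x\<bar>" by (metis power_one_over real_sqrt_abs)
      then show ?thesis using xn by simp
    qed
    have "\<bar>1/z - 1/x\<bar> = \<bar>sqrt (1/z^2) - sqrt (1/x^2)\<bar>" unfolding i1 i2 by simp
    also have "\<dots> \<le> \<bar>1/z^2 - 1/x^2\<bar> / sqrt (1/x^2)"
      using sqrt_diff_le[of "1/z^2" "1/x^2"] xn by simp
    also have "\<dots> = \<bar>1/z^2 - 1/x^2\<bar> * \<bar>x\<bar>" by (simp add: real_sqrt_divide)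
    also have "\<dots> \<le> \<eta>' * (1 + 1/(s*\<bar>x\<bar>) + \<eta>'/(4* s^2)) * \<bar>x\<bar>" using e2 by (intro mult_right_mono) auto
    also have "\<dots> = \<eta>' * (\<bar>x\<bar> + 1/s + \<eta>' * \<bar>x\<bar>/(4* s^2))" using ax s0 by (simp add: field_simps)
    also have "\<dots> \<le> \<eta>' * (R1 + 1 + R1)"
    proof -
      have "1/s \<le> 1" using sc(1) by simp
      moreover have "\<eta>' * \<bar>x\<bar>/(4* s^2) \<le> R1"
      proof -
        have "\<eta>' * \<bar>x\<bar> \<le> 1 * R1" using \<eta>' ax by (intro mult_mono) auto
        moreover have "4* s^2 \<ge> 1" using sc(1) s4 by linarith
        ultimately have "\<eta>' * \<bar>x\<bar>/(4* s^2) \<le> \<eta>' * \<bar>x\<bar>/1"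
          using \<eta>'(1) by (intro divide_left_mono) auto
        then show ?thesis using \<open>\<eta>' * \<bar>x\<bar> \<le> 1 * R1\<close> by simp
      qed
      ultimately show ?thesis using ax \<eta>'(1) by (intro mult_left_mono) auto
    qed
    also have "\<dots> \<le> \<eta>" using \<eta>'(4) R1 by (simp add: field_simps)
    finally show ?thesis using ew by simp
  qed
  have "adm w {-R1..R2}"
    unfolding adm_def
  proof
    fix x assume "x \<in> {-R1..R2}"
    then show "admp w x" using P Nn by (cases "x < 0") auto
  qed
  then show ?thesis using P Nn by blast
qed

lemma level:
  fixes k :: nat and c R1 R2 \<eta> :: real
  assumes "k \<ge> 1" "R1 > 0" "R2 > 0" "1 + c*R2^(2^k) > 0" "\<eta> > 0"
  shows "\<exists>w. adm w {-R1..R2} \<and> (\<forall>x\<in>{0..R2}. \<bar>evw w x - Pf (2^k) c x\<bar> \<le> \<eta>) \<and> (\<forall>x\<in>{-R1..<0}. \<bar>1/evw w x - 1/x\<bar> \<le> \<eta>)"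
  using assms
proof (induction k arbitrary: R1 R2 \<eta> rule: nat_induct_at_least)
  case base
  then show ?case using base_level[of R1 R2 c \<eta>] by simp
next
  case (Suc k)
  have e: "(2::nat)^(Suc k) = 2 * 2^k" by simp
  show ?case unfolding e
    by (rule zoom_level[of "2^k" c R1 R2 \<eta>]) (use Suc in \<open>auto simp: e\<close>)
qed

lemma apx_Pf:
  fixes k :: nat and c p q :: real
  assumes "k \<ge> 1" "p < 0" "0 < q" "1 + c*q^(2^k) > 0"
  shows "apx (Pf (2^k) c) p q"
  unfolding apx_def
proof (intro allI impI)
  fix \<eta> :: real assume \<eta>: "\<eta> > 0"
  define R1 where "R1 = -p"
  have R1: "R1 > 0" using assms unfolding R1_def by simp
  define \<eta>' where "\<eta>' = min \<eta> (min (\<eta>/(2*R1^2)) (1/(2*R1)))"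
  have \<eta>': "\<eta>' > 0" "\<eta>' \<le> \<eta>/(2*R1^2)" "\<eta>' \<le> 1/(2*R1)" "\<eta>' \<le> \<eta>" unfolding \<eta>'_def using R1 \<eta> by auto
  obtain w where w: "adm w {-R1..q}" "\<forall>x\<in>{0..q}. \<bar>evw w x - Pf (2^k) c x\<bar> \<le> \<eta>'"
    "\<forall>x\<in>{-R1..<0}. \<bar>1/evw w x - 1/x\<bar> \<le> \<eta>'"
    using level[OF assms(1) R1 assms(3,4) \<eta>'(1)] by blast
  have "\<bar>evw w x - Pf (2^k) c x\<bar> \<le> \<eta>" if x: "x \<in> {p..q}" for x
  proof (cases "x \<ge> 0")
    case True
    then have "x \<in> {0..q}" using x by auto
    then show ?thesis using w(2) \<eta>'(4) by fastforce
  next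
    case False
    then have xn: "x < 0" "-R1 \<le> x" using x unfolding R1_def by auto
    have ad: "admp w x" using w(1) x unfolding adm_def R1_def by auto
    have en: "evw w x < 0" using evw_sgn[OF ad] xn by simp
    have "\<bar>evw w x - x\<bar> \<le> 2*R1^2*\<eta>'"
      using vx_conv[OF xn(1) xn(2) en _ \<eta>'(3)] w(3) xn by auto
    also have "\<dots> \<le> \<eta>" using \<eta>'(2) R1 by (simp add: field_simps)
    finally show ?thesis using xn by simp
  qed
  then show "\<exists>w. adm w {p..q} \<and> (\<forall>x\<in>{p..q}. \<bar>evw w x - Pf (2 ^ k) c x\<bar> \<le> \<eta>)"
    using w(1) unfolding R1_def by (intro exI[of _ w]) auto
qed

lemma goodG_Pf:
  fixes k :: nat and c :: real
  assumes "k \<ge> 1" "c \<ge> 0"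
  shows "goodG (Pf (2^k) c)"
  unfolding goodG_def
proof (intro allI impI conjI)
  fix R :: real assume R: "R > 0"
  have "1 + c*R^(2^k) > 0" using assms R by (simp add: add_pos_nonneg)
  then show "apx (Pf (2^k) c) (-R) R" using apx_Pf assms R by simp
  show "continuous_on {-R..R} (Pf (2^k) c)"
    by (rule Pf_cont) (use assms in \<open>auto intro: add_pos_nonneg\<close>)
qed

lemma goodG_id: "goodG id"
  unfolding goodG_def apx_def
proof (intro allI impI conjI)
  fix R \<eta> :: real assume "R > 0" "\<eta> > 0"
  then show "\<exists>w. adm w {-R..R} \<and> (\<forall>x\<in>{-R..R}. \<bar>evw w x - id x\<bar> \<le> \<eta>)"
    by (intro exI[of _ "[]"]) (auto simp: adm_def)
  show "continuous_on {-R..R} id" by (intro continuous_intros)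
qed

definition Pmap :: "(real \<Rightarrow> real) \<Rightarrow> bool" where
  "Pmap G \<longleftrightarrow> goodG G \<and> (\<forall>z\<le>0. G z = z) \<and> (\<forall>a b. 0 < a \<longrightarrow> a < b \<longrightarrow> 0 < G a \<and> G a < G b)"

lemma Pmap_id: "Pmap id" unfolding Pmap_def using goodG_id by auto

lemma Pmap_comp:
  assumes F: "Pmap F" and G: "Pmap G" shows "Pmap (G \<circ> F)"
proof -
  have gF: "goodG F" "\<forall>z\<le>0. F z = z" "\<forall>a b. 0 < a \<longrightarrow> a < b \<longrightarrow> 0 < F a \<and> F a < F b"
    using F unfolding Pmap_def by auto
  have gG: "goodG G" "\<forall>z\<le>0. G z = z" "\<forall>a b. 0 < a \<longrightarrow> a < b \<longrightarrow> 0 < G a \<and> G a < G b"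
    using G unfolding Pmap_def by auto
  have "0 < G (F a) \<and> G (F a) < G (F b)" if "0 < a" "a < b" for a b
  proof -
    have "0 < F a" "F a < F b" using gF(3) that by auto
    then show ?thesis using gG(3) by auto
  qed
  then show ?thesis unfolding Pmap_def using goodG_comp[OF gF(1) gG(1)] gF(2) gG(2) by auto
qed

lemma Pf_pos_mono:
  assumes "0 < a" "a < b" "1 + c*b^N > 0" "N > 0"
  shows "0 < Pf N c a" "Pf N c a < Pf N c b"
proof -
  have ca: "1 + c*a^N > 0" using pos_on_interval[OF assms(3), of a] assms by auto
  note A = Pf_pos[OF assms(1) ca assms(4)]
  note B = Pf_pos[OF _ assms(3) assms(4)] 
  have bp: "b > 0" using assms by simp
  show "0 < Pf N c a" using A by simp
  have "1/b^N < 1/a^N" using assms by (simp add: frac_less2 power_strict_mono)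
  then have "1/(Pf N c b)^N < 1/(Pf N c a)^N" using A(3) B(3)[OF bp] by simp
  then have "(Pf N c a)^N < (Pf N c b)^N" using A(1) B(1)[OF bp]
    by (simp add: field_simps)
  then show "Pf N c a < Pf N c b" using B(1)[OF bp] A(1) power_less_imp_less_base by (meson less_le)
qed

lemma Pmap_Pf:
  fixes k :: nat and c :: real
  assumes "k \<ge> 1" "c \<ge> 0"
  shows "Pmap (Pf (2^k) c)"
proof -
  have "0 < Pf (2^k) c a \<and> Pf (2^k) c a < Pf (2^k) c b" if "0 < a" "a < b" for a b
  proof -
    have "b > 0" using that by simp
    then have "1 + c*b^(2^k) > 0" using assms by (simp add: add_pos_nonneg)
    then show ?thesis using Pf_pos_mono[of a b c "2^k"] that by auto
  qed
  then show ?thesis unfolding Pmap_def using goodG_Pf[OF assms] by auto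
qed

definition Dn :: "nat \<Rightarrow> real \<Rightarrow> real \<Rightarrow> real" where
  "Dn M d = Pf M (-(sqrt d)) \<circ> Pf (2*M) d"

lemma Dn_inner:
  fixes z d :: real
  assumes z: "z > 0" and d: "d \<ge> 0" and M: "M > 0"
  shows "Pf (2*M) d z > 0" "1/(Pf (2*M) d z)^M = sqrt (1/z^(2*M) + d)"
    "1 + (-(sqrt d)) * (Pf (2*M) d z)^M > 0"
proof -
  define w where "w = Pf (2*M) d z"
  have c: "1 + d*z^(2*M) > 0" using z d by (simp add: add_pos_nonneg)
  note P = Pf_pos[OF z c, unfolded w_def[symmetric]]
  show wp: "Pf (2*M) d z > 0" using P M by (simp add: w_def)
  have wp': "w > 0" using wp unfolding w_def .
  have "(1/w^M)^2 = 1/w^(2*M)" by (simp add: power_mult[symmetric] power_one_over mult.commute)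
  also have "\<dots> = 1/z^(2*M) + d" using P M by simp
  finally have sq: "(1/w^M)^2 = 1/z^(2*M) + d" .
  have "1/w^M = sqrt (1/z^(2*M) + d)" using sq wp' by (metis real_sqrt_unique less_eq_real_def zero_less_divide_1_iff zero_less_power)
  then show i: "1/(Pf (2*M) d z)^M = sqrt (1/z^(2*M) + d)" unfolding w_def .
  have "sqrt d < sqrt (1/z^(2*M) + d)" using z by (intro real_sqrt_less_mono) simp
  then have "sqrt d < 1/w^M" using i unfolding w_def by simp
  then have "sqrt d * w^M < 1" using wp' by (simp add: field_simps)
  then show "1 + (-(sqrt d)) * (Pf (2*M) d z)^M > 0" unfolding w_def by simp
qed

lemma Dn_pos:
  fixes z d :: real
  assumes z: "z > 0" and d: "d \<ge> 0" and M: "M > 0"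
  shows "Dn M d z > 0" "1/(Dn M d z)^M = sqrt (1/z^(2*M) + d) - sqrt d"
proof -
  note I = Dn_inner[OF z d M]
  note P = Pf_pos[OF I(1) I(3) M]
  show "Dn M d z > 0" using P unfolding Dn_def by simp
  show "1/(Dn M d z)^M = sqrt (1/z^(2*M) + d) - sqrt d" using P(3) I(2) unfolding Dn_def by simp
qed

lemma Dn_nonpos[simp]: "z \<le> 0 \<Longrightarrow> Dn M d z = z" unfolding Dn_def by simp

lemma Dn_mono:
  fixes a b d :: real
  assumes "0 < a" "a < b" "d \<ge> 0" "M > 0"
  shows "Dn M d a < Dn M d b"
proof -
  have bp: "b > 0" using assms by simp
  have c: "1 + d*b^(2*M) > 0" using bp assms by (simp add: add_pos_nonneg)
  have m1: "Pf (2*M) d a < Pf (2*M) d b" "0 < Pf (2*M) d a" using Pf_pos_mono[OF assms(1,2) c] assms by auto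
  show ?thesis unfolding Dn_def o_def
    using Pf_pos_mono(2)[OF m1(2) m1(1) Dn_inner(3)[OF bp assms(3,4)] assms(4)] .
qed

lemma Pf_le_mono:
  assumes "0 < a" "a \<le> b" "1 + c*b^N > 0" "N > 0"
  shows "Pf N c a \<le> Pf N c b"
  using Pf_pos_mono[OF assms(1) _ assms(3,4)] assms(2) by (cases "a = b") auto

lemma goodG_Dn:
  fixes k :: nat and d :: real
  assumes k: "k \<ge> 1" and d: "d \<ge> 0"
  shows "goodG (Dn (2^k) d)"
  unfolding goodG_def
proof (intro allI impI conjI)
  fix R :: real assume R: "R > 0"
  define M where "M = (2::nat)^k"
  have M: "M > 0" unfolding M_def by simp
  have e2: "2*M = 2^(Suc k)" unfolding M_def by simp
  have gf: "goodG (Pf (2*M) d)" unfolding e2 using goodG_Pf[of "Suc k" d] d by simp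
  have af: "apx (Pf (2*M) d) (-R) R" and cf: "continuous_on {-R..R} (Pf (2*M) d)"
    using gf R unfolding goodG_def by auto
  define Y0 where "Y0 = Pf (2*M) d R"
  have Y0: "Y0 > 0" "1 + (-(sqrt d)) * Y0^M > 0" using Dn_inner[OF R d M] unfolding Y0_def by auto
  obtain q' where q': "q' > Y0" "1 + (-(sqrt d))*q'^M > 0" using exists_R2'[OF Y0(2)] by blast
  have q'p: "q' > 0" using q' Y0 by simp
  have ag: "apx (Pf M (-(sqrt d))) (-R-1) q'"
    using apx_Pf[of k "-R-1" q' "-(sqrt d)"] k R q'p q'(2) unfolding M_def by simp
  have posq: "\<forall>x\<in>{0..q'}. 1 + (-(sqrt d))*x^M > 0" using pos_on_interval[OF q'(2)] by auto
  have cg: "continuous_on {-R-1..q'} (Pf M (-(sqrt d)))" by (rule Pf_cont[OF posq])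
  define r where "r = min 1 (q' - Y0)"
  have r: "r > 0" "r \<le> 1" "r \<le> q' - Y0" unfolding r_def using q' by auto
  have img: "Pf (2*M) d x \<in> {-R..Y0}" if x: "x \<in> {-R..R}" for x
  proof (cases "x \<le> 0")
    case True then show ?thesis using x Y0 by auto
  next
    case False
    have c: "1 + d*R^(2*M) > 0" using R d by (simp add: add_pos_nonneg)
    have "Pf (2*M) d x \<le> Y0" unfolding Y0_def using Pf_le_mono[of x R d "2*M"] False x c M by auto
    moreover have "Pf (2*M) d x > 0" using Dn_inner(1)[of x d M] False d M by simp
    ultimately show ?thesis using R by auto
  qed
  have fr: "\<forall>x\<in>{-R..R}. (-R-1) + r \<le> Pf (2*M) d x \<and> Pf (2*M) d x \<le> q' - r"
    using img r by fastforce
  have "apx (Pf M (-(sqrt d)) \<circ> Pf (2*M) d) (-R) R"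
    by (rule apx_comp[OF af cf ag cg r(1) fr])
  then show "apx (Dn (2^k) d) (-R) R" unfolding Dn_def M_def by simp
  have "Pf (2*M) d ` {-R..R} \<subseteq> {-R-1..q'}" using img q' by force
  then have "continuous_on {-R..R} (Pf M (-(sqrt d)) \<circ> Pf (2*M) d)"
    using continuous_on_compose cf cg continuous_on_subset by blast
  then show "continuous_on {-R..R} (Dn (2^k) d)" unfolding Dn_def M_def by simp
qed

lemma Pmap_Dn:
  fixes k :: nat and d :: real
  assumes k: "k \<ge> 1" and d: "d \<ge> 0"
  shows "Pmap (Dn (2^k) d)"
proof -
  have M: "(2::nat)^k > 0" by simp
  have "0 < Dn (2^k) d a \<and> Dn (2^k) d a < Dn (2^k) d b" if "0 < a" "a < b" for a b
    using Dn_pos(1)[OF that(1) d M] Dn_mono[OF that d M] by simp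
  then show ?thesis unfolding Pmap_def using goodG_Dn[OF k d] by auto
qed

lemma pow_eq_pos: "(a::real) > 0 \<Longrightarrow> b > 0 \<Longrightarrow> M > 0 \<Longrightarrow> 1/a^M = 1/b^M \<Longrightarrow> a = b"
  by (metis less_eq_real_def nonzero_imp_inverse_nonzero power_eq_imp_eq_base inverse_eq_divide inverse_inverse_eq)

lemma pow_le_base: "(a::real) \<ge> 0 \<Longrightarrow> b \<ge> 0 \<Longrightarrow> (M::nat) > 0 \<Longrightarrow> a^M \<le> b^M \<Longrightarrow> a \<le> b"
  using power_mono_iff by blast

lemma in_step:
  fixes q t u :: real and k :: nat
  assumes q: "0 < q" "q \<le> t" and tu: "t \<le> u" and k: "k \<ge> 1"
  shows "\<exists>G. Pmap G \<and> G u = t \<and> (\<forall>z\<in>{0<..q}. G z \<le> z \<and> z - q*(q/t)^(2^k) \<le> G z)"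
proof -
  define M where "M = (2::nat)^k"
  have M: "M > 0" unfolding M_def by simp
  have tp: "t > 0" "u > 0" using q tu by auto
  define c where "c = 1/t^M - 1/u^M"
  have c0: "c \<ge> 0" unfolding c_def using tu tp by (simp add: frac_le power_mono)
  define G where "G = Pf M c"
  have PG: "Pmap G" unfolding G_def M_def using Pmap_Pf[OF k c0] .
  have cpos: "1 + c*z^M > 0" if "z \<ge> 0" for z using c0 that by (simp add: add_pos_nonneg)
  have Gu: "G u = t"
  proof -
    note P = Pf_pos[OF tp(2) cpos[OF less_imp_le[OF tp(2)]] M]
    have e: "1/(G u)^M = 1/t^M" using P(3) unfolding G_def c_def using tp by simp
    have Gp: "G u > 0" using P(1) unfolding G_def .
    show ?thesis using pow_eq_pos[OF Gp tp(1) M] e by blast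
  qed
  have loc: "G z \<le> z \<and> z - q*(q/t)^M \<le> G z" if z: "z \<in> {0<..q}" for z
  proof -
    have zp: "z > 0" "z \<le> q" using z by auto
    note P = Pf_pos[OF zp(1) cpos[OF less_imp_le[OF zp(1)]] M]
    have Gp: "G z > 0" using P(1) unfolding G_def .
    have i: "1/(G z)^M = 1/z^M + c" using P(3) unfolding G_def .
    define e where "e = c * z^M"
    have e0: "e \<ge> 0" unfolding e_def using c0 zp by simp
    have eb: "e \<le> (q/t)^M"
    proof -
      have "c \<le> 1/t^M" unfolding c_def using tp by simp
      then have "e \<le> z^M/t^M" unfolding e_def using zp by (simp add: mult_right_mono divide_inverse mult.commute)
      also have "\<dots> \<le> q^M/t^M" using zp tp by (intro divide_right_mono power_mono) auto
      finally show ?thesis by (simp add: power_divide)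
    qed
    have GM: "(G z)^M = z^M/(1+e)"
    proof -
      have h: "1/(G z)^M = (1+e)/z^M" using i zp unfolding e_def by (simp add: field_simps)
      have "(G z)^M = 1/(1/(G z)^M)" by simp
      also have "\<dots> = z^M/(1+e)" unfolding h by simp
      finally show ?thesis .
    qed
    have "G z \<le> z"
    proof -
      have "(G z)^M \<le> z^M" unfolding GM using e0 zp by (simp add: divide_le_eq field_simps)
      then show ?thesis using Gp zp pow_le_base[of "G z" z M] M by auto
    qed
    moreover have "z/(1+e) \<le> G z"
    proof -
      have "(1+e)^1 \<le> (1+e)^M" using e0 M by (intro power_increasing) auto
      then have "(z/(1+e))^M \<le> (G z)^M" unfolding GM power_divide using zp e0
        by (intro divide_left_mono) auto
      then show ?thesis using Gp zp e0 pow_le_base[of "z/(1+e)" "G z" M] M by auto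
    qed
    moreover have "z - z/(1+e) \<le> q*(q/t)^M"
    proof -
      have "z - z/(1+e) = z*e/(1+e)" using e0 by (simp add: field_simps)
      also have "\<dots> \<le> z*e" using e0 zp by (simp add: divide_le_eq field_simps mult_left_mono)
      also have "\<dots> \<le> q*(q/t)^M" using eb e0 zp by (intro mult_mono) auto
      finally show ?thesis .
    qed
    ultimately show ?thesis by linarith
  qed
  show ?thesis using PG Gu loc unfolding M_def by blast
qed

lemma out_step:
  fixes q t u :: real and k :: nat
  assumes q: "0 < q" "q \<le> u" and ut: "u \<le> t" and tq: "t*q \<le> u^2" and k: "k \<ge> 1"
  shows "\<exists>G. Pmap G \<and> G u = t \<and> (\<forall>z\<in>{0<..q}. z \<le> G z \<and> G z \<le> z + q*(t*q/u^2)^(2^k))"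
proof -
  define M where "M = (2::nat)^k"
  have M: "M > 0" unfolding M_def by simp
  have up: "u > 0" "t > 0" using q ut by auto
  define a where "a = 1/u^(2*M)"
  define b where "b = 1/t^M"
  have ap: "a > 0" "b > 0" unfolding a_def b_def using up by auto
  have ab: "b^2 \<le> a"
  proof -
    have "u^(2*M) \<le> t^(2*M)" using up ut by (intro power_mono) auto
    then have "1/t^(2*M) \<le> 1/u^(2*M)" using up by (intro divide_left_mono) auto
    then show ?thesis unfolding a_def b_def by (simp add: power_mult[symmetric] power_one_over mult.commute)
  qed
  define sd where "sd = (a - b^2)/(2*b)"
  have sd0: "sd \<ge> 0" unfolding sd_def using ab ap by simp
  define d where "d = sd^2"
  have d0: "d \<ge> 0" unfolding d_def by simp
  have sqd: "sqrt d = sd" unfolding d_def using sd0 by simp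
  define G where "G = Dn M d"
  have PG: "Pmap G" unfolding G_def M_def using Pmap_Dn[OF k d0] .
  have Gu: "G u = t"
  proof -
    have s1: "sqrt (a + d) = (a + b^2)/(2*b)"
    proof -
      have "(a + b^2)^2/(2*b)^2 = a + d" unfolding d_def sd_def using ap
        by (simp add: field_simps power2_eq_square)
      moreover have "(a + b^2)/(2*b) \<ge> 0" using ap by simp
      ultimately show ?thesis by (metis power_divide real_sqrt_unique)
    qed
    have "1/(G u)^M = sqrt (a + d) - sd" using Dn_pos(2)[OF up(1) d0 M] sqd unfolding G_def a_def by simp
    also have "\<dots> = b" unfolding s1 sd_def using ap by (simp add: field_simps power2_eq_square)
    finally have "1/(G u)^M = 1/t^M" unfolding b_def .
    then show ?thesis using pow_eq_pos[OF _ up(2) M] Dn_pos(1)[OF up(1) d0 M] unfolding G_def by blast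
  qed
  have loc: "z \<le> G z \<and> G z \<le> z + q*(t*q/u^2)^M" if z: "z \<in> {0<..q}" for z
  proof -
    have zp: "z > 0" "z \<le> q" using z by auto
    define A where "A = 1/z^(2*M)"
    have A0: "A > 0" unfolding A_def using zp by simp
    have sA: "sqrt A = 1/z^M"
    proof -
      have "z^(2*M) = (z^M)^2" by (simp add: power_mult[symmetric] mult.commute)
      then have "sqrt (z^(2*M)) = z^M" using zp by simp
      then show ?thesis unfolding A_def by (simp add: real_sqrt_divide)
    qed
    have i: "1/(G z)^M = sqrt (A + d) - sd" using Dn_pos(2)[OF zp(1) d0 M] sqd unfolding G_def A_def by simp
    have Gp: "G z > 0" using Dn_pos(1)[OF zp(1) d0 M] unfolding G_def .
    have up1: "sqrt (A + d) \<le> sqrt A + sd"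
    proof -
      have "A + d \<le> (sqrt A + sd)^2" unfolding d_def using A0 sd0 by (simp add: power2_eq_square algebra_simps)
      then have "sqrt (A + d) \<le> sqrt ((sqrt A + sd)^2)" by (rule real_sqrt_le_mono)
      also have "\<dots> = sqrt A + sd" using A0 sd0 by simp
      finally show ?thesis .
    qed
    have lo1: "sqrt A \<le> sqrt (A + d)" using d0 by simp
    have "1/(G z)^M \<le> 1/z^M" using i up1 sA by simp
    then have "z^M \<le> (G z)^M" using Gp zp by (simp add: field_simps)
    then have g1: "z \<le> G z" using Gp zp pow_le_base[of z "G z" M] M by auto
    define e where "e = sd * z^M"
    have e0: "e \<ge> 0" unfolding e_def using sd0 zp by simp
    have eb: "e \<le> (t*q/u^2)^M / 2"
    proof -
      have "sd \<le> a/(2*b)" unfolding sd_def using ap by (simp add: divide_right_mono)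
      also have "a/(2*b) = t^M/(2*u^(2*M))" unfolding a_def b_def using up by simp
      finally have sdb: "sd \<le> t^M/(2*u^(2*M))" .
      have "sd * z^M \<le> t^M/(2*u^(2*M)) * z^M" by (rule mult_right_mono[OF sdb]) (use zp in simp)
      then have "e \<le> t^M/(2*u^(2*M)) * z^M" unfolding e_def .
      also have "\<dots> \<le> t^M/(2*u^(2*M)) * q^M" using zp up by (intro mult_left_mono power_mono) auto
      also have "\<dots> = (t*q/u^2)^M / 2" by (simp add: power_divide power_mult_distrib power_mult[symmetric] mult.commute)
      finally show ?thesis .
    qed
    have rho1: "t*q/u^2 \<le> 1" using tq up by simp
    have rho0: "t*q/u^2 \<ge> 0" using up q by simp
    have "(t*q/u^2)^M \<le> 1" using rho0 rho1 by (simp add: power_le_one)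
    then have e1: "e \<le> 1/2" using eb by simp
    have "1/(G z)^M \<ge> 1/z^M - sd" using i lo1 sA by simp
    also have "1/z^M - sd = (1 - e)/z^M" unfolding e_def using zp by (simp add: field_simps)
    finally have lo: "(1 - e)/z^M \<le> 1/(G z)^M" .
    have "(G z)^M \<le> z^M/(1-e)"
    proof -
      have "(G z)^M * (1 - e) \<le> z^M" using lo Gp zp e1 by (simp add: field_simps)
      then show ?thesis using e1 by (simp add: field_simps)
    qed
    also have "\<dots> \<le> (z/(1-e))^M"
    proof -
      have "(1-e)^M \<le> (1-e)^1" using e0 e1 M by (intro power_decreasing) auto
      then show ?thesis unfolding power_divide using zp e1 by (intro divide_left_mono) auto
    qed
    finally have "G z \<le> z/(1-e)" using Gp zp e1 pow_le_base[of "G z" "z/(1-e)" M] M by auto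
    also have "z/(1-e) = z + z*e/(1-e)" using e1 by (simp add: field_simps)
    also have "z*e/(1-e) \<le> 2*z*e" using e0 e1 zp by (simp add: field_simps mult_left_mono)
    also have "2*z*e \<le> q*(t*q/u^2)^M"
    proof -
      have "2*z*e \<le> 2*q*e" using zp e0 by (intro mult_right_mono) auto
      also have "\<dots> \<le> 2*q*((t*q/u^2)^M / 2)" using eb q by (intro mult_left_mono) auto
      finally show ?thesis by simp
    qed
    finally show ?thesis using g1 by simp
  qed
  show ?thesis using PG Gu loc unfolding M_def by blast
qed

lemma out_chain:
  fixes q r0 \<rho>0 \<epsilon> t :: real and k K :: nat
  assumes k: "k \<ge> 1" and q: "0 < q" and r0: "1 < r0" and \<rho>0: "0 \<le> \<rho>0" "\<rho>0 \<le> 1"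
    and \<epsilon>: "\<epsilon> = q * \<rho>0^(2^k)"
  shows "\<forall>u Q. q < u \<longrightarrow> u \<le> t \<longrightarrow> t \<le> u * r0^K \<longrightarrow> r0*q \<le> \<rho>0*u \<longrightarrow> 0 < Q \<longrightarrow> Q + K*\<epsilon> \<le> q
     \<longrightarrow> (\<exists>G. Pmap G \<and> G u = t \<and> (\<forall>z\<in>{0<..Q}. z \<le> G z \<and> G z \<le> z + K*\<epsilon>))"
proof (induction K)
  case 0
  show ?case
  proof (intro allI impI)
    fix u Q :: real assume h: "q < u" "u \<le> t" "t \<le> u * r0^0"
    then have "u = t" by simp
    then show "\<exists>G. Pmap G \<and> G u = t \<and> (\<forall>z\<in>{0<..Q}. z \<le> G z \<and> G z \<le> z + real 0 * \<epsilon>)"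
      using Pmap_id by (intro exI[of _ id]) auto
  qed
next
  case (Suc K)
  have e0: "\<epsilon> \<ge> 0" unfolding \<epsilon> using q \<rho>0 by simp
  show ?case
  proof (intro allI impI)
    fix u Q :: real
    assume u: "q < u" "u \<le> t" "t \<le> u * r0^(Suc K)" "r0*q \<le> \<rho>0*u" "0 < Q" "Q + real (Suc K)*\<epsilon> \<le> q"
    have up: "u > 0" using u q by simp
    define c where "c = min t (u*r0)"
    have uc: "u \<le> c" unfolding c_def using u r0 up by (simp add: mult_le_cancel_left1)
    have cq: "c*q \<le> u^2"
    proof -
      have "c*q \<le> u*r0*q" unfolding c_def using q by (simp add: mult_right_mono)
      also have "\<dots> \<le> u*(\<rho>0*u)" using u(4) up by (simp add: mult.assoc mult_left_mono)
      also have "\<dots> \<le> u*u" using \<rho>0 up by (simp add: mult_left_mono mult_right_mono)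
      finally show ?thesis by (simp add: power2_eq_square)
    qed
    obtain G1 where G1: "Pmap G1" "G1 u = c" "\<forall>z\<in>{0<..q}. z \<le> G1 z \<and> G1 z \<le> z + q*(c*q/u^2)^(2^k)"
      using out_step[OF q less_imp_le[OF u(1)] uc cq k] by blast
    have rb: "c*q/u^2 \<le> \<rho>0"
    proof -
      have "c*q \<le> u*r0*q" unfolding c_def using q by (simp add: mult_right_mono)
      also have "\<dots> \<le> u*(\<rho>0*u)" using u(4) up by (simp add: mult.assoc mult_left_mono)
      finally show ?thesis using up by (simp add: field_simps power2_eq_square)
    qed
    have G1e: "\<forall>z\<in>{0<..q}. z \<le> G1 z \<and> G1 z \<le> z + \<epsilon>"
    proof
      fix z assume z: "z \<in> {0<..q}"
      have "(c*q/u^2)^(2^k) \<le> \<rho>0^(2^k)" using rb q up uc by (intro power_mono) auto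
      then have "q*(c*q/u^2)^(2^k) \<le> \<epsilon>" unfolding \<epsilon> using q by (simp add: mult_left_mono)
      then show "z \<le> G1 z \<and> G1 z \<le> z + \<epsilon>" using G1(3) z by fastforce
    qed
    have "real (Suc K)*\<epsilon> \<ge> 0" using e0 by simp
    then have Qq: "Q \<le> q" using u(6) by linarith
    show "\<exists>G. Pmap G \<and> G u = t \<and> (\<forall>z\<in>{0<..Q}. z \<le> G z \<and> G z \<le> z + real (Suc K)*\<epsilon>)"
    proof (cases "c = t")
      case True
      have "\<forall>z\<in>{0<..Q}. z \<le> G1 z \<and> G1 z \<le> z + real (Suc K)*\<epsilon>"
      proof
        fix z assume z: "z \<in> {0<..Q}"
        then have "z \<in> {0<..q}" using Qq by auto
        then have "z \<le> G1 z \<and> G1 z \<le> z + \<epsilon>" using G1e by blast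
        moreover have "\<epsilon> \<le> real (Suc K) * \<epsilon>" using e0 by (simp add: algebra_simps)
        ultimately show "z \<le> G1 z \<and> G1 z \<le> z + real (Suc K)*\<epsilon>" by linarith
      qed
      then show ?thesis using G1 True by blast
    next
      case False
      then have c: "c = u*r0" "u*r0 < t" unfolding c_def by auto
      have h1: "q < c" using u(1) uc by linarith
      have h3: "t \<le> c * r0^K" using u(3) c by (simp add: mult.assoc)
      have "\<rho>0*u \<le> \<rho>0*c" using uc \<rho>0 by (intro mult_left_mono) auto
      then have h4: "r0*q \<le> \<rho>0*c" using u(4) by linarith
      have h5: "0 < Q + \<epsilon>" using u(5) e0 by simp
      have h6: "(Q + \<epsilon>) + real K*\<epsilon> \<le> q" using u(6) by (simp add: algebra_simps)
      obtain G2 where G2: "Pmap G2" "G2 c = t" "\<forall>z\<in>{0<..Q+\<epsilon>}. z \<le> G2 z \<and> G2 z \<le> z + real K*\<epsilon>"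
      proof -
        have h2: "c \<le> t" using c by simp
        show ?thesis using Suc.IH[rule_format, OF h1 h2 h3 h4 h5 h6] that by blast
      qed
      have "\<forall>z\<in>{0<..Q}. z \<le> (G2 \<circ> G1) z \<and> (G2 \<circ> G1) z \<le> z + real (Suc K)*\<epsilon>"
      proof
        fix z assume z: "z \<in> {0<..Q}"
        then have "z \<in> {0<..q}" using Qq by auto
        then have a: "z \<le> G1 z" "G1 z \<le> z + \<epsilon>" using G1e by auto
        then have "G1 z \<in> {0<..Q+\<epsilon>}" using z by auto
        then have "G1 z \<le> G2 (G1 z)" "G2 (G1 z) \<le> G1 z + real K*\<epsilon>" using G2(3) by auto
        then show "z \<le> (G2 \<circ> G1) z \<and> (G2 \<circ> G1) z \<le> z + real (Suc K)*\<epsilon>"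
          using a by (simp add: algebra_simps)
      qed
      then show ?thesis using Pmap_comp[OF G1(1) G2(1)] G1(2) G2(2) by (intro exI[of _ "G2 \<circ> G1"]) auto
    qed
  qed
qed

lemma small_pow:
  fixes \<rho> C \<eta> :: real
  assumes "0 \<le> \<rho>" "\<rho> < 1" "0 \<le> C" "\<eta> > 0"
  shows "\<exists>k\<ge>1. C * \<rho>^(2^k) \<le> \<eta>"
proof -
  obtain n where n: "\<rho>^n < \<eta>/(C+1)" using real_arch_pow_inv[of "\<eta>/(C+1)" \<rho>] assms by auto
  have "n < 2^n" by (rule less_exp)
  moreover have "(2::nat)^n \<le> 2^(Suc n)" by simp
  ultimately have "n \<le> 2^(Suc n)" by linarith
  then have "\<rho>^(2^(Suc n)) \<le> \<rho>^n" using assms by (intro power_decreasing) auto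
  then have "C * \<rho>^(2^(Suc n)) \<le> C * (\<eta>/(C+1))" using n assms by (intro mult_left_mono) auto
  also have "\<dots> \<le> \<eta>" using assms by (simp add: field_simps)
  finally show ?thesis by (intro exI[of _ "Suc n"]) auto
qed

lemma move:
  fixes q0 u t \<eta> :: real
  assumes q0: "0 < q0" "q0 < u" "q0 < t" and \<eta>: "\<eta> > 0"
  shows "\<exists>G. Pmap G \<and> G u = t \<and> (\<forall>z\<in>{0<..q0}. \<bar>G z - z\<bar> \<le> \<eta>)"
proof (cases "t \<le> u")
  case True
  have r: "0 \<le> q0/t" "q0/t < 1" using q0 by auto
  obtain k where k: "k \<ge> 1" "q0 * (q0/t)^(2^k) \<le> \<eta>" using small_pow[OF r _ \<eta>, of q0] q0 by auto
  obtain G where G: "Pmap G" "G u = t" "\<forall>z\<in>{0<..q0}. G z \<le> z \<and> z - q0*(q0/t)^(2^k) \<le> G z"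
    using in_step[OF q0(1) less_imp_le[OF q0(3)] True k(1)] by blast
  have "\<forall>z\<in>{0<..q0}. \<bar>G z - z\<bar> \<le> \<eta>"
  proof
    fix z assume "z \<in> {0<..q0}"
    then have "G z \<le> z" "z - q0*(q0/t)^(2^k) \<le> G z" using G(3) by auto
    then show "\<bar>G z - z\<bar> \<le> \<eta>" using k(2) by (simp add: abs_le_iff)
  qed
  then show ?thesis using G by blast
next
  case False
  then have tu: "u < t" by simp
  define q where "q = (q0 + u)/2"
  have q: "q0 < q" "q < u" "0 < q" unfolding q_def using q0 by auto
  define r0 where "r0 = sqrt (u/q)"
  have uq: "u/q > 1" using q by simp
  have r0: "r0 > 1" unfolding r0_def using uq by simp
  have r0u: "r0 < u/q"
  proof -
    have "(sqrt (u/q))^2 = u/q" using uq by simp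
    then have "sqrt (u/q) * sqrt (u/q) = u/q" by (simp add: power2_eq_square)
    moreover have "sqrt (u/q) > 1" using uq by (simp add: real_sqrt_gt_1_iff)
    ultimately have "sqrt (u/q) * 1 < sqrt (u/q) * sqrt (u/q)" by (intro mult_strict_left_mono) auto
    then show ?thesis unfolding r0_def using \<open>sqrt (u/q) * sqrt (u/q) = u/q\<close> by simp
  qed
  define \<rho>0 where "\<rho>0 = r0*q/u"
  have \<rho>0: "0 \<le> \<rho>0" "\<rho>0 < 1" unfolding \<rho>0_def using r0 r0u q by (auto simp: field_simps)
  obtain K where K: "t/u < r0^K" using real_arch_pow[OF r0] by blast
  have tK: "t \<le> u * r0^K" using K q by (simp add: field_simps)
  obtain k where k: "k \<ge> 1" "real K * q * \<rho>0^(2^k) \<le> min \<eta> (q - q0)"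
    using small_pow[OF \<rho>0, of "real K * q" "min \<eta> (q - q0)"] q \<eta> by auto
  define \<epsilon> where "\<epsilon> = q * \<rho>0^(2^k)"
  have Ke: "real K * \<epsilon> \<le> \<eta>" "q0 + real K * \<epsilon> \<le> q" using k(2) unfolding \<epsilon>_def by (auto simp: mult.assoc)
  have h4: "r0*q \<le> \<rho>0*u" unfolding \<rho>0_def using q by simp
  obtain G where G: "Pmap G" "G u = t" "\<forall>z\<in>{0<..q0}. z \<le> G z \<and> G z \<le> z + real K * \<epsilon>"
    using out_chain[OF k(1) q(3) r0 \<rho>0(1) less_imp_le[OF \<rho>0(2)] \<epsilon>_def, of t K, rule_format,
        OF q(2) less_imp_le[OF tu] tK h4 q0(1) Ke(2)] by blast
  have "\<forall>z\<in>{0<..q0}. \<bar>G z - z\<bar> \<le> \<eta>"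
  proof
    fix z assume "z \<in> {0<..q0}"
    then have "z \<le> G z" "G z \<le> z + real K * \<epsilon>" using G(3) by auto
    then show "\<bar>G z - z\<bar> \<le> \<eta>" using Ke(1) by (simp add: abs_le_iff)
  qed
  then show ?thesis using G by blast
qed

lemma Pmap_le: "Pmap F \<Longrightarrow> 0 < a \<Longrightarrow> a \<le> b \<Longrightarrow> F a \<le> F b"
  unfolding Pmap_def by (metis order_le_less)

lemma Pmap_pos: "Pmap F \<Longrightarrow> 0 < a \<Longrightarrow> 0 < F a"
  unfolding Pmap_def by (metis less_add_one)

lemma OS:
  fixes xs ys :: "nat \<Rightarrow> real" and n :: nat
  assumes "\<forall>i<n. 0 < xs i" "\<forall>i j. i < j \<longrightarrow> j < n \<longrightarrow> xs i < xs j"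
    "\<forall>i<n. 0 < ys i" "\<forall>i j. i < j \<longrightarrow> j < n \<longrightarrow> ys i < ys j" "\<eta> > 0"
  shows "\<exists>F. Pmap F \<and> (\<forall>i<n. \<bar>F (xs i) - ys i\<bar> \<le> \<eta>)"
  using assms
proof (induction n arbitrary: \<eta>)
  case 0 then show ?case using Pmap_id by blast
next
  case (Suc n)
  define \<eta>' where "\<eta>' = (if n = 0 then \<eta>/2 else min (\<eta>/2) ((ys n - ys (n-1))/2))"
  have \<eta>': "\<eta>' > 0" "\<eta>' \<le> \<eta>/2" unfolding \<eta>'_def using Suc.prems by auto
  have \<eta>'2: "n > 0 \<Longrightarrow> \<eta>' \<le> (ys n - ys (n-1))/2"
  proof -
    assume "n > 0"
    then have "\<eta>' = min (\<eta>/2) ((ys n - ys (n-1))/2)" unfolding \<eta>'_def by simp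
    then show ?thesis by (metis min.cobounded2)
  qed
  obtain F where F: "Pmap F" "\<forall>i<n. \<bar>F (xs i) - ys i\<bar> \<le> \<eta>'"
    using Suc.IH[of \<eta>'] Suc.prems \<eta>'(1) by auto
  have xn: "0 < xs n" "0 < ys n" using Suc.prems by auto
  define u where "u = F (xs n)"
  have up: "u > 0" unfolding u_def using Pmap_pos[OF F(1) xn(1)] .
  define q0 where "q0 = (if n = 0 then min u (ys n) / 2 else F (xs (n-1)))"
  have q0: "0 < q0" "q0 < u" "q0 < ys n"
  proof -
    show "0 < q0"
    proof (cases "n = 0")
      case True then show ?thesis unfolding q0_def using up xn by simp
    next
      case False then show ?thesis unfolding q0_def using Pmap_pos[OF F(1)] Suc.prems(1) by simp
    qed
    show "q0 < u"
    proof (cases "n = 0")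
      case True then show ?thesis unfolding q0_def using up by simp
    next
      case False
      have "xs (n-1) < xs n" "0 < xs (n-1)" using Suc.prems(1,2) False by auto
      then show ?thesis unfolding q0_def u_def using F(1) False unfolding Pmap_def by auto
    qed
    show "q0 < ys n"
    proof (cases "n = 0")
      case True then show ?thesis unfolding q0_def using up xn by simp
    next
      case False
      have "\<bar>F (xs (n-1)) - ys (n-1)\<bar> \<le> \<eta>'" using F(2) False by simp
      moreover have "ys (n-1) < ys n" using Suc.prems(4) False by simp
      ultimately show ?thesis unfolding q0_def using False \<eta>'2 by (auto simp: abs_le_iff)
    qed
  qed
  have \<eta>2: "\<eta>/2 > 0" using Suc.prems by simp
  obtain G where G: "Pmap G" "G u = ys n" "\<forall>z\<in>{0<..q0}. \<bar>G z - z\<bar> \<le> \<eta>/2"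
    using move[OF q0(1) q0(2) q0(3) \<eta>2] by blast
  have "\<bar>(G \<circ> F) (xs i) - ys i\<bar> \<le> \<eta>" if i: "i < Suc n" for i
  proof (cases "i = n")
    case True then show ?thesis using G(2) Suc.prems unfolding u_def by simp
  next
    case False
    then have i': "i < n" using i by simp
    then have "n > 0" by simp
    have xi: "0 < xs i" using Suc.prems(1) i by simp
    have "xs i \<le> xs (n-1)"
    proof (cases "i = n - 1")
      case True then show ?thesis by simp
    next
      case False
      then have "i < n - 1" "n - 1 < Suc n" using i' by auto
      then show ?thesis using Suc.prems(2) by (meson less_imp_le)
    qed
    then have "F (xs i) \<le> q0" unfolding q0_def using Pmap_le[OF F(1) xi] \<open>n > 0\<close> by simp
    moreover have "0 < F (xs i)" using Pmap_pos[OF F(1) xi] .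
    ultimately have "\<bar>G (F (xs i)) - F (xs i)\<bar> \<le> \<eta>/2" using G(3) by auto
    moreover have "\<bar>F (xs i) - ys i\<bar> \<le> \<eta>/2" using F(2) i' \<eta>'(2) by fastforce
    ultimately show ?thesis unfolding o_def
      by (simp only: abs_le_iff, elim conjE, intro conjI; linarith)
  qed
  then show ?case using Pmap_comp[OF F(1) G(1)] by blast
qed

lemma grid_approx:
  fixes h :: "real \<Rightarrow> real" and R \<eta> :: real and n :: nat
  assumes R: "R > 0" and n: "n > 0" and sm: "strict_mono h" and h0: "h 0 = 0" and \<eta>: "\<eta> > 0"
  shows "\<exists>F. goodG F \<and> (\<forall>j::int. -int n \<le> j \<longrightarrow> j \<le> int n \<longrightarrow> \<bar>F (j*R/n) - h (j*R/n)\<bar> \<le> \<eta>)"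
proof -
  define xs where "xs i = real (Suc i) * R / n" for i
  have xsp: "\<forall>i<n. 0 < xs i" unfolding xs_def using R n by auto
  have xsm: "\<forall>i j. i < j \<longrightarrow> j < n \<longrightarrow> xs i < xs j" unfolding xs_def using R n
    by (auto simp: divide_strict_right_mono)
  have hpos: "h x > 0" if "x > 0" for x using sm h0 that by (metis strict_monoD)
  have hneg: "h x < 0" if "x < 0" for x using sm h0 that by (metis strict_monoD)
  obtain Fp where Fp: "Pmap Fp" "\<forall>i<n. \<bar>Fp (xs i) - h (xs i)\<bar> \<le> \<eta>"
    using OS[of n xs "\<lambda>i. h (xs i)" \<eta>] xsp xsm hpos \<eta> sm by (auto simp: strict_mono_def)
  have ysm: "\<forall>i j. i < j \<longrightarrow> j < n \<longrightarrow> - h (- xs i) < - h (- xs j)"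
    using xsm sm by (auto simp: strict_mono_def)
  obtain Fm where Fm: "Pmap Fm" "\<forall>i<n. \<bar>Fm (xs i) - (- h (- xs i))\<bar> \<le> \<eta>"
    using OS[of n xs "\<lambda>i. - h (- xs i)" \<eta>] xsp xsm hneg \<eta> ysm by auto
  define F where "F = (\<lambda>x. - Fm (-x)) \<circ> Fp"
  have gF: "goodG F" unfolding F_def using Fp(1) Fm(1) unfolding Pmap_def
    by (intro goodG_comp goodG_mir) auto
  have "\<bar>F (j*R/n) - h (j*R/n)\<bar> \<le> \<eta>" if j: "-int n \<le> j" "j \<le> int n" for j :: int
  proof (cases "j > 0")
    case True
    define i where "i = nat j - 1"
    have i: "i < n" "real_of_int j * R / n = xs i" unfolding i_def xs_def using j True by auto
    have p: "Fp (xs i) > 0" using Pmap_pos[OF Fp(1)] xsp i by auto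
    have "F (xs i) = Fp (xs i)" unfolding F_def using Fm(1) p unfolding Pmap_def by auto
    then show ?thesis using Fp(2) i by auto
  next
    case False
    show ?thesis
    proof (cases "j = 0")
      case True
      have "Fp 0 = 0" "Fm 0 = 0" using Fp(1) Fm(1) unfolding Pmap_def by auto
      then show ?thesis using True h0 \<eta> unfolding F_def by simp
    next
      case False
      then have jn: "j < 0" using \<open>\<not> j > 0\<close> by simp
      define i where "i = nat (-j) - 1"
      have i: "i < n" "real_of_int j * R / n = - xs i" unfolding i_def xs_def using j jn by auto
      have "Fp (- xs i) = - xs i" using Fp(1) xsp i unfolding Pmap_def by auto
      then have "F (- xs i) = - Fm (xs i)" unfolding F_def by simp
      then show ?thesis using Fm(2) i by auto
    qed
  qed
  then show ?thesis using gF by blast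
qed

lemma grid_in:
  fixes R :: real and n :: nat and j :: int
  assumes R: "R > 0" and n0: "n > 0" and j: "-int n \<le> j" "j \<le> int n"
  shows "real_of_int j * R / n \<in> {-R..R}"
proof -
  have "\<bar>real_of_int j\<bar> \<le> n" using j by auto
  then have B: "\<bar>real_of_int j\<bar> * R / n \<le> n * R / n" using R n0 by (intro divide_right_mono mult_right_mono) auto
  have A: "\<bar>real_of_int j * R / n\<bar> = \<bar>real_of_int j\<bar> * R / n" using R n0 by (simp add: abs_mult)
  have C: "n * R / n = R" using n0 by simp
  have "\<bar>real_of_int j * R / n\<bar> \<le> R" unfolding A using B unfolding C .
  then show ?thesis unfolding atLeastAtMost_iff abs_le_iff by simp
qed

theorem lemma3p15:
  fixes K :: "real set" and h :: "real \<Rightarrow> real" and \<epsilon> :: real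
  assumes "compact K" and "continuous_on UNIV h" and "strict_mono h" and "h 0 = 0"
    and "\<epsilon> > 0"
  shows "\<exists>\<phi>\<in>A_F K. \<exists>\<delta><\<epsilon>. \<forall>x\<in>K. \<bar>\<phi> x - h x\<bar> \<le> \<delta>"
proof -
  note cK = assms(1) and ch = assms(2) and sm = assms(3) and h0 = assms(4) and \<epsilon> = assms(5)
  obtain R0 where R0: "\<forall>x\<in>K. \<bar>x\<bar> \<le> R0"
    using compact_imp_bounded[OF cK] unfolding bounded_iff by auto
  define R where "R = \<bar>R0\<bar> + 1"
  have R: "R > 0" "K \<subseteq> {-R..R}" using R0 unfolding R_def by (auto simp: abs_le_iff)
  define \<eta> where "\<eta> = \<epsilon>/4"
  have \<eta>: "\<eta> > 0" unfolding \<eta>_def using \<epsilon> by simp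
  have uc: "uniformly_continuous_on {-R..R} h"
    using compact_uniformly_continuous[OF continuous_on_subset[OF ch] compact_Icc] by simp
  obtain \<delta> where \<delta>: "\<delta> > 0" "\<And>a b. a \<in> {-R..R} \<Longrightarrow> b \<in> {-R..R} \<Longrightarrow> dist b a < \<delta> \<Longrightarrow> dist (h b) (h a) < \<eta>"
    using uniformly_continuous_onE[OF uc \<eta>] by metis
  obtain n :: nat where n: "R/\<delta> < n" using reals_Archimedean2 by blast
  have n0: "n > 0" using n R \<delta> by (metis divide_pos_pos gr0I of_nat_0 order.asym)
  have step: "R/n < \<delta>" using n n0 R \<delta> by (simp add: field_simps)
  obtain F where F: "goodG F" "\<forall>j::int. -int n \<le> j \<longrightarrow> j \<le> int n \<longrightarrow> \<bar>F (j*R/n) - h (j*R/n)\<bar> \<le> \<eta>"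
    using grid_approx[OF R(1) n0 sm h0 \<eta>] by blast
  obtain w where w: "adm w {-R..R}" "\<forall>x\<in>{-R..R}. \<bar>evw w x - F x\<bar> \<le> \<eta>"
    using F(1) R(1) \<eta> unfolding goodG_def apx_def by blast
  have gp: "\<bar>evw w (j*R/n) - h (j*R/n)\<bar> \<le> 2*\<eta>" if j: "-int n \<le> j" "j \<le> int n" for j :: int
  proof -
    have "real_of_int j * R / n \<in> {-R..R}"
    proof -
      have "\<bar>real_of_int j\<bar> \<le> n" using j by auto
      then have B: "\<bar>real_of_int j\<bar> * R / n \<le> n * R / n" using R n0 by (intro divide_right_mono mult_right_mono) auto
      have A: "\<bar>real_of_int j * R / n\<bar> = \<bar>real_of_int j\<bar> * R / n" using R n0 by (simp add: abs_mult)
      have C: "n * R / n = R" using n0 by simp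
      have "\<bar>real_of_int j * R / n\<bar> \<le> R" unfolding A using B unfolding C .
      then show ?thesis unfolding atLeastAtMost_iff abs_le_iff by simp
    qed
    then have "\<bar>evw w (j*R/n) - F (j*R/n)\<bar> \<le> \<eta>" using w(2) by blast
    moreover have "\<bar>F (j*R/n) - h (j*R/n)\<bar> \<le> \<eta>" using F(2) j by blast
    ultimately show ?thesis by (simp only: abs_le_iff, elim conjE, intro conjI; linarith)
  qed
  have main: "\<bar>evw w x - h x\<bar> \<le> 3*\<eta>" if x: "x \<in> {-R..R}" for x
  proof -
    define j where "j = \<lfloor>x * n / R\<rfloor>"
    have j1: "real_of_int j \<le> x * n / R" "x * n / R < real_of_int j + 1" unfolding j_def by linarith+
    have jlo: "-int n \<le> j"
    proof -
      have "-R * n / R \<le> x * n / R" using x R n0 by (intro divide_right_mono mult_right_mono) auto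
      then have "- real n \<le> x * n / R" using R by simp
      then show ?thesis unfolding j_def by linarith
    qed
    have jhi: "j \<le> int n"
    proof -
      have "x * n / R \<le> R * n / R" using x R n0 by (intro divide_right_mono mult_right_mono) auto
      then have "x * n / R \<le> n" using R by simp
      then show ?thesis unfolding j_def by linarith
    qed
    define g1 where "g1 = real_of_int j * R / n"
    have g1x: "g1 \<le> x" using j1(1) R n0 unfolding g1_def by (simp add: field_simps)
    have xg: "x < g1 + R/n" using j1(2) R n0 unfolding g1_def by (simp add: field_simps)
    have g1R: "g1 \<in> {-R..R}"
    proof -
      have "\<bar>real_of_int j\<bar> \<le> n" using jlo jhi by auto
      then have B: "\<bar>real_of_int j\<bar> * R / n \<le> n * R / n" using R n0 by (intro divide_right_mono mult_right_mono) auto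
      have A: "\<bar>g1\<bar> = \<bar>real_of_int j\<bar> * R / n" unfolding g1_def using R n0 by (simp add: abs_mult)
      have C: "n * R / n = R" using n0 by simp
      have "\<bar>g1\<bar> \<le> R" unfolding A using B unfolding C .
      then show ?thesis unfolding atLeastAtMost_iff abs_le_iff by simp
    qed
    obtain j2 where j2: "-int n \<le> j2" "j2 \<le> int n" "x \<le> real_of_int j2 * R / n" "real_of_int j2 * R / n - g1 \<le> R/n"
    proof (cases "j < int n")
      case True
      have "real_of_int (j+1) * R / n = g1 + R/n" unfolding g1_def by (simp add: add_divide_distrib algebra_simps)
      then show ?thesis using that[of "j+1"] jlo True xg by auto
    next
      case False
      then have "j = int n" using jhi by simp
      then have "g1 = R" unfolding g1_def using n0 by simp
      then show ?thesis using that[of j] jlo jhi x R n0 by (auto simp: g1_def)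
    qed
    define g2 where "g2 = real_of_int j2 * R / n"
    have g2R: "g2 \<in> {-R..R}" using grid_in[OF R(1) n0 j2(1,2)] unfolding g2_def .
    have d: "dist g2 g1 < \<delta>" using j2(4) g1x j2(3) step unfolding g2_def dist_real_def by auto
    have hd: "h g2 - h g1 < \<eta>" using \<delta>(2)[OF g1R g2R d] unfolding dist_real_def by auto
    have ad: "admp w g1" "admp w x" "admp w g2" using w(1) g1R x g2R unfolding adm_def by auto
    have m1: "evw w g1 \<le> evw w x" "evw w x \<le> evw w g2"
      using evw_mono_le ad g1x j2(3) unfolding g2_def by auto
    have mh: "h g1 \<le> h x" "h x \<le> h g2" using sm g1x j2(3) unfolding g2_def
      by (auto simp: strict_mono_less_eq)
    have e1: "\<bar>evw w g1 - h g1\<bar> \<le> 2*\<eta>" using gp jlo jhi unfolding g1_def by blast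
    have e2: "\<bar>evw w g2 - h g2\<bar> \<le> 2*\<eta>" using gp j2 unfolding g2_def by blast
    show ?thesis using m1 mh e1 e2 hd
      by (simp only: abs_le_iff, elim conjE, intro conjI; linarith)
  qed
  have aK: "adm w K" using w(1) R(2) unfolding adm_def by auto
  obtain \<phi> where \<phi>: "AF K \<phi> (evw w ` K)" "\<forall>x\<in>K. \<phi> x = evw w x" using realize[OF cK aK] by blast
  have "\<phi> \<in> A_F K" unfolding A_F_def using \<phi>(1) by blast
  moreover have "3*\<eta> < \<epsilon>" unfolding \<eta>_def using \<epsilon> by simp
  moreover have "\<forall>x\<in>K. \<bar>\<phi> x - h x\<bar> \<le> 3*\<eta>" using main \<phi>(2) R(2) by auto
  ultimately show ?thesis by blast
qed

end
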